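(* For all $p,q\ge0$ and $1\le a,b,c,d\le K$, the Poisson brackets on $\mathcal M(N,K)$ satisfy $$\{t^{(p)}_{ab},t^{(q)}_{cd}\}=\sum_{i=-1}^{\min(p,q)-1}\left(t^{(p+q-1-i)}_{ad}t^{(i)}_{cb}-t^{(i)}_{ad}t^{(p+q-1-i)}_{cb}\right),$$ with the convention $t^{(-1)}_{ab}=\delta_{ab}$. Moreover, for all $n\ge1$ the bracket of $\mathrm{Tr}(\widetilde B^n)$ with every element of $\mathbb C[\mathcal M(N,K)]$ is zero. In particular, the bracket satisfies the Jacobi identity on $\mathbb C[\mathcal M(N,K)]$ and so defines a Poisson structure on $\mathcal M(N,K)$.
   Context: $\mathrm{Rep}(N,K)$ is the space of triples $(B,\psi,\overline\psi)$, $B\in\mathrm{Mat}_{N\times N}(\mathbb C)$, $\psi\in\mathrm{Mat}_{N\times K}$ (columns $\psi_a$), $\overline\psi\in\mathrm{Mat}_{K\times N}$ (rows $\overline\psi_a$), with $\mathrm{GL}_N$-action $g\cdot(B,\psi,\overline\psi)=(gBg^{-1},g\psi,\overline\psi g^{-1})$, and $\mathcal M(N,K)=\mathrm{Spec}\,\mathbb C[\mathrm{Rep}(N,K)]^{\mathrm{GL}_N}$. A $\mathrm{GL}_N$-equivariant bivector is defined on $\mathrm{Rep}(N,K)$ by $\{\psi_{ia},\overline\psi_{bj}\}=\delta_{ab}\delta_{ij}$, $\{B_{mn},B_{pq}\}=\delta_{np}\sum_a\overline\psi_{aq}\psi_{ma}-\delta_{mq}\sum_a\overline\psi_{an}\psi_{pa}$,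 $\{B_{mn},\overline\psi_{bj}\}=\{B_{mn},\psi_{ia}\}=0$, extended as a biderivation (all variables treated as commuting), and it descends to invariant functions. $\widetilde B=B+\psi\overline\psi$, and $t^{(k)}_{ab}=2^{-k}\overline\psi_a\widetilde B^k\psi_b$ for $k\ge0$. *)

theory Defs
  imports "HOL-Analysis.Analysis"
begin

text \<open>A point of Rep(N,K): matrices B (N x N), psi (N x K), psibar (K x N),
  represented as functions on natural-number indices; only indices
  below N resp. K are relevant (indices start at 0).\<close>
record rep =
  Bm :: "nat \<Rightarrow> nat \<Rightarrow> complex"
  ps :: "nat \<Rightarrow> nat \<Rightarrow> complex"
  pb :: "nat \<Rightarrow> nat \<Rightarrow> complex"

inductive_set poly_fun :: "nat \<Rightarrow> nat \<Rightarrow> (rep \<Rightarrow> complex) set" for N K where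
  pf_const: "(\<lambda>x. c) \<in> poly_fun N K"
| pf_B: "i < N \<Longrightarrow> j < N \<Longrightarrow> (\<lambda>x. Bm x i j) \<in> poly_fun N K"
| pf_psi: "i < N \<Longrightarrow> a < K \<Longrightarrow> (\<lambda>x. ps x i a) \<in> poly_fun N K"
| pf_psib: "a < K \<Longrightarrow> i < N \<Longrightarrow> (\<lambda>x. pb x a i) \<in> poly_fun N K"
| pf_add: "f \<in> poly_fun N K \<Longrightarrow> g \<in> poly_fun N K \<Longrightarrow> (\<lambda>x. f x + g x) \<in> poly_fun N K"
| pf_mult: "f \<in> poly_fun N K \<Longrightarrow> g \<in> poly_fun N K \<Longrightarrow> (\<lambda>x. f x * g x) \<in> poly_fun N K"

definition mmul :: "nat \<Rightarrow> (nat \<Rightarrow> nat \<Rightarrow> complex) \<Rightarrow> (nat \<Rightarrow> nat \<Rightarrow> complex) \<Rightarrow> nat \<Rightarrow> nat \<Rightarrow> complex" where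
  "mmul n A C = (\<lambda>i j. \<Sum>k<n. A i k * C k j)"

fun mpow :: "nat \<Rightarrow> (nat \<Rightarrow> nat \<Rightarrow> complex) \<Rightarrow> nat \<Rightarrow> nat \<Rightarrow> nat \<Rightarrow> complex" where
  "mpow n A 0 = (\<lambda>i j. if i = j then 1 else 0)"
| "mpow n A (Suc k) = mmul n (mpow n A k) A"

text \<open>GL_N action: g with inverse h.\<close>
definition is_inv_pair :: "nat \<Rightarrow> (nat \<Rightarrow> nat \<Rightarrow> complex) \<Rightarrow> (nat \<Rightarrow> nat \<Rightarrow> complex) \<Rightarrow> bool" where
  "is_inv_pair N g h \<longleftrightarrow> (\<forall>i<N. \<forall>j<N. mmul N g h i j = (if i = j then 1 else 0)
                                         \<and> mmul N h g i j = (if i = j then 1 else 0))"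

definition gl_act :: "nat \<Rightarrow> (nat \<Rightarrow> nat \<Rightarrow> complex) \<Rightarrow> (nat \<Rightarrow> nat \<Rightarrow> complex) \<Rightarrow> rep \<Rightarrow> rep" where
  "gl_act N g h x = \<lparr> Bm = mmul N (mmul N g (Bm x)) h, ps = mmul N g (ps x), pb = mmul N (pb x) h \<rparr>"

text \<open>Coordinate ring of M(N,K) = GL_N-invariant polynomial functions on Rep(N,K).\<close>
definition inv_alg :: "nat \<Rightarrow> nat \<Rightarrow> (rep \<Rightarrow> complex) set" where
  "inv_alg N K = {f \<in> poly_fun N K. \<forall>g h x. is_inv_pair N g h \<longrightarrow> f (gl_act N g h x) = f x}"

definition dB :: "(rep \<Rightarrow> complex) \<Rightarrow> rep \<Rightarrow> nat \<Rightarrow> nat \<Rightarrow> complex" where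
  "dB f x m n = deriv (\<lambda>s. f (x\<lparr>Bm := (Bm x)(m := (Bm x m)(n := s))\<rparr>)) (Bm x m n)"

definition dps :: "(rep \<Rightarrow> complex) \<Rightarrow> rep \<Rightarrow> nat \<Rightarrow> nat \<Rightarrow> complex" where
  "dps f x i a = deriv (\<lambda>s. f (x\<lparr>ps := (ps x)(i := (ps x i)(a := s))\<rparr>)) (ps x i a)"

definition dpb :: "(rep \<Rightarrow> complex) \<Rightarrow> rep \<Rightarrow> nat \<Rightarrow> nat \<Rightarrow> complex" where
  "dpb f x a i = deriv (\<lambda>s. f (x\<lparr>pb := (pb x)(a := (pb x a)(i := s))\<rparr>)) (pb x a i)"

definition Bbr :: "nat \<Rightarrow> rep \<Rightarrow> nat \<Rightarrow> nat \<Rightarrow> nat \<Rightarrow> nat \<Rightarrow> complex" where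
  "Bbr K x m n p q =
     (if n = p then (\<Sum>a<K. pb x a q * ps x m a) else 0)
   - (if m = q then (\<Sum>a<K. pb x a n * ps x p a) else 0)"

text \<open>The bivector, extended as a biderivation:
  {f,g} = sum over coordinates u,v of df/du * dg/dv * {u,v}.\<close>
definition pbr :: "nat \<Rightarrow> nat \<Rightarrow> (rep \<Rightarrow> complex) \<Rightarrow> (rep \<Rightarrow> complex) \<Rightarrow> rep \<Rightarrow> complex" where
  "pbr N K f g = (\<lambda>x.
      (\<Sum>i<N. \<Sum>a<K. dps f x i a * dpb g x a i - dpb f x a i * dps g x i a)
    + (\<Sum>m<N. \<Sum>n<N. \<Sum>p<N. \<Sum>q<N. dB f x m n * dB g x p q * Bbr K x m n p q))"

definition Bt :: "nat \<Rightarrow> rep \<Rightarrow> nat \<Rightarrow> nat \<Rightarrow> complex" where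
  "Bt K x = (\<lambda>i j. Bm x i j + (\<Sum>a<K. ps x i a * pb x a j))"

definition tfun :: "nat \<Rightarrow> nat \<Rightarrow> nat \<Rightarrow> nat \<Rightarrow> nat \<Rightarrow> rep \<Rightarrow> complex" where
  "tfun N K k a b = (\<lambda>x. (1 / 2 ^ k) *
      (\<Sum>i<N. \<Sum>j<N. pb x a i * mpow N (Bt K x) k i j * ps x j b))"

definition tfun' :: "nat \<Rightarrow> nat \<Rightarrow> int \<Rightarrow> nat \<Rightarrow> nat \<Rightarrow> rep \<Rightarrow> complex" where
  "tfun' N K k a b = (if k = -1 then (\<lambda>x. if a = b then 1 else 0) else tfun N K (nat k) a b)"

definition trBt :: "nat \<Rightarrow> nat \<Rightarrow> nat \<Rightarrow> rep \<Rightarrow> complex" where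
  "trBt N K n = (\<lambda>x. \<Sum>i<N. mpow N (Bt K x) n i i)"

end

theory Submission
  imports Defs
begin
datatype crd = CB nat nat | CS nat nat | CP nat nat

fun get :: "rep \<Rightarrow> crd \<Rightarrow> complex" where
  "get x (CB m n) = Bm x m n"
| "get x (CS i a) = ps x i a"
| "get x (CP a i) = pb x a i"

fun upd :: "rep \<Rightarrow> crd \<Rightarrow> complex \<Rightarrow> rep" where
  "upd x (CB m n) s = x\<lparr>Bm := (Bm x)(m := (Bm x m)(n := s))\<rparr>"
| "upd x (CS i a) s = x\<lparr>ps := (ps x)(i := (ps x i)(a := s))\<rparr>"
| "upd x (CP a i) s = x\<lparr>pb := (pb x)(a := (pb x a)(i := s))\<rparr>"

lemma get_upd: "get (upd x u s) v = (if u = v then s else get x v)"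
  by (cases u; cases v; auto)

lemma upd_upd[simp]: "upd (upd x u s) u t = upd x u t"
  by (cases u; auto)

lemma get_upd_same[simp]: "get (upd x u s) u = s"
  by (simp add: get_upd)

definition dd :: "(rep \<Rightarrow> complex) \<Rightarrow> rep \<Rightarrow> crd \<Rightarrow> complex" where
  "dd f x u = deriv (\<lambda>s. f (upd x u s)) (get x u)"

lemma dB_dd: "dB f x m n = dd f x (CB m n)" by (simp add: dB_def dd_def)
lemma dps_dd: "dps f x i a = dd f x (CS i a)" by (simp add: dps_def dd_def)
lemma dpb_dd: "dpb f x a i = dd f x (CP a i)" by (simp add: dpb_def dd_def)

lemma get_diff: "(\<lambda>s. get (upd x u s) v) field_differentiable at s"
  by (cases "u = v") (simp_all add: get_upd field_differentiable_ident field_differentiable_const)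

lemma pf_differentiable:
  assumes "f \<in> poly_fun N K"
  shows "(\<lambda>s. f (upd x u s)) field_differentiable at s"
  using assms
proof (induction f arbitrary: s rule: poly_fun.induct)
  case (pf_const c) then show ?case by simp
next
  case (pf_B i j) then show ?case
    using get_diff[of x u "CB i j" s] by simp
next
  case (pf_psi i a) then show ?case
    using get_diff[of x u "CS i a" s] by simp
next
  case (pf_psib a i) then show ?case
    using get_diff[of x u "CP a i" s] by simp
next
  case (pf_add f g) then show ?case by (auto intro!: derivative_intros)
next
  case (pf_mult f g) then show ?case by (auto intro!: derivative_intros)
qed

lemma upd_get[simp]: "upd x u (get x u) = x"
  by (cases u) auto

lemma pf_minus: "f \<in> poly_fun N K \<Longrightarrow> g \<in> poly_fun N K \<Longrightarrow> (\<lambda>x. f x - g x) \<in> poly_fun N K"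
proof -
  assume a: "f \<in> poly_fun N K" "g \<in> poly_fun N K"
  have "(\<lambda>x. (-1) * g x) \<in> poly_fun N K" using a by (intro poly_fun.pf_mult poly_fun.pf_const)
  then have "(\<lambda>x. f x + (-1) * g x) \<in> poly_fun N K" using a by (intro poly_fun.pf_add)
  then show ?thesis by simp
qed

lemma pf_sum: "finite A \<Longrightarrow> (\<And>i. i \<in> A \<Longrightarrow> F i \<in> poly_fun N K) \<Longrightarrow> (\<lambda>x. \<Sum>i\<in>A. F i x) \<in> poly_fun N K"
proof (induction A rule: finite_induct)
  case empty then show ?case using poly_fun.pf_const[of 0] by simp
next
  case (insert a A) then show ?case using poly_fun.pf_add[of "F a" N K "\<lambda>x. \<Sum>i\<in>A. F i x"] by simp
qed

lemma dd_const[simp]: "dd (\<lambda>x. c) x u = 0"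
  by (simp add: dd_def)

lemma dd_get: "dd (\<lambda>x. get x v) x u = (if u = v then 1 else 0)"
  unfolding dd_def get_upd by (cases "u = v") simp_all

lemma dd_add: "f \<in> poly_fun N K \<Longrightarrow> g \<in> poly_fun N K \<Longrightarrow> dd (\<lambda>x. f x + g x) x u = dd f x u + dd g x u"
  unfolding dd_def by (rule deriv_add) (auto intro: pf_differentiable)

lemma dd_mult: "f \<in> poly_fun N K \<Longrightarrow> g \<in> poly_fun N K \<Longrightarrow> dd (\<lambda>x. f x * g x) x u = f x * dd g x u + dd f x u * g x"
  unfolding dd_def by (subst deriv_mult) (auto intro: pf_differentiable)

lemma dd_minus: "f \<in> poly_fun N K \<Longrightarrow> g \<in> poly_fun N K \<Longrightarrow> dd (\<lambda>x. f x - g x) x u = dd f x u - dd g x u"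
  unfolding dd_def by (rule deriv_diff) (auto intro: pf_differentiable)

lemma dd_cmult: "f \<in> poly_fun N K \<Longrightarrow> dd (\<lambda>x. c * f x) x u = c * dd f x u"
  using dd_mult[of "\<lambda>x. c" N K f x u] by (simp add: poly_fun.pf_const)

lemma dd_sum: "finite A \<Longrightarrow> (\<And>i. i \<in> A \<Longrightarrow> F i \<in> poly_fun N K) \<Longrightarrow> dd (\<lambda>x. \<Sum>i\<in>A. F i x) x u = (\<Sum>i\<in>A. dd (F i) x u)"
proof (induction A rule: finite_induct)
  case empty then show ?case by simp
next
  case (insert a A)
  have "dd (\<lambda>x. \<Sum>i\<in>insert a A. F i x) x u = dd (\<lambda>x. F a x + (\<Sum>i\<in>A. F i x)) x u"
    using insert by simp
  also have "\<dots> = dd (F a) x u + dd (\<lambda>x. \<Sum>i\<in>A. F i x) x u"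
    by (rule dd_add[where N=N and K=K]) (auto intro!: pf_sum insert.prems insert.hyps)
  finally show ?case using insert by simp
qed

lemma dd_pf: "f \<in> poly_fun N K \<Longrightarrow> (\<lambda>x. dd f x u) \<in> poly_fun N K"
proof (induction f rule: poly_fun.induct)
  case (pf_const c) then show ?case by (simp add: poly_fun.pf_const)
next
  case (pf_B i j) then show ?case using dd_get[of "CB i j" _ u] by (simp add: poly_fun.pf_const)
next
  case (pf_psi i a) then show ?case using dd_get[of "CS i a" _ u] by (simp add: poly_fun.pf_const)
next
  case (pf_psib a i) then show ?case using dd_get[of "CP a i" _ u] by (simp add: poly_fun.pf_const)
next
  case (pf_add f g) then show ?case by (simp add: dd_add poly_fun.pf_add)
next
  case (pf_mult f g) then show ?case by (simp add: dd_mult poly_fun.pf_add poly_fun.pf_mult)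
qed

lemma swap22: "(\<Sum>m<N. \<Sum>n<N. \<Sum>p<N. \<Sum>q<N. H m n p q) = (\<Sum>p<N. \<Sum>q<N. \<Sum>m<N. \<Sum>n<N. H m n p q :: complex)"
proof -
  have "(\<Sum>m<N. \<Sum>n<N. \<Sum>p<N. \<Sum>q<N. H m n p q) = (\<Sum>m<N. \<Sum>p<N. \<Sum>n<N. \<Sum>q<N. H m n p q)"
    by (rule sum.cong[OF refl], rule sum.swap)
  also have "\<dots> = (\<Sum>m<N. \<Sum>p<N. \<Sum>q<N. \<Sum>n<N. H m n p q)"
    by (rule sum.cong[OF refl], rule sum.cong[OF refl], rule sum.swap)
  also have "\<dots> = (\<Sum>p<N. \<Sum>m<N. \<Sum>q<N. \<Sum>n<N. H m n p q)"
    by (rule sum.swap)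
  also have "\<dots> = (\<Sum>p<N. \<Sum>q<N. \<Sum>m<N. \<Sum>n<N. H m n p q)"
    by (rule sum.cong[OF refl], rule sum.swap)
  finally show ?thesis .
qed

definition PB :: "nat \<Rightarrow> nat \<Rightarrow> (crd \<Rightarrow> complex) \<Rightarrow> (crd \<Rightarrow> complex) \<Rightarrow> rep \<Rightarrow> complex" where
  "PB N K F G x =
      (\<Sum>i<N. \<Sum>a<K. F (CS i a) * G (CP a i) - F (CP a i) * G (CS i a))
    + (\<Sum>m<N. \<Sum>n<N. \<Sum>p<N. \<Sum>q<N. F (CB m n) * G (CB p q) * Bbr K x m n p q)"

lemma pbr_PB: "pbr N K f g x = PB N K (dd f x) (dd g x) x"
  by (simp add: pbr_def PB_def dB_dd dps_dd dpb_dd)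

lemma PB_lin: "PB N K (\<lambda>u. a * F1 u + b * F2 u) G x = a * PB N K F1 G x + b * PB N K F2 G x"
proof -
  have e1: "\<And>i c. (a * F1 (CS i c) + b * F2 (CS i c)) * G (CP c i) - (a * F1 (CP c i) + b * F2 (CP c i)) * G (CS i c)
     = a * (F1 (CS i c) * G (CP c i) - F1 (CP c i) * G (CS i c)) + b * (F2 (CS i c) * G (CP c i) - F2 (CP c i) * G (CS i c))"
    by algebra
  have e2: "\<And>m n p q. (a * F1 (CB m n) + b * F2 (CB m n)) * G (CB p q) * Bbr K x m n p q
     = a * (F1 (CB m n) * G (CB p q) * Bbr K x m n p q) + b * (F2 (CB m n) * G (CB p q) * Bbr K x m n p q)"
    by algebra
  show ?thesis unfolding PB_def e1 e2 sum.distrib sum_distrib_left[symmetric] by algebra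
qed

lemma PB_zero: "PB N K (\<lambda>u. 0) G x = 0"
  by (simp add: PB_def)

lemma Bbr_skew: "Bbr K x p q m n = - Bbr K x m n p q"
  by (simp add: Bbr_def)

lemma PB_skew: "PB N K F G x = - PB N K G F x"
proof -
  have 1: "(\<Sum>i<N. \<Sum>a<K. F (CS i a) * G (CP a i) - F (CP a i) * G (CS i a))
     = - (\<Sum>i<N. \<Sum>a<K. G (CS i a) * F (CP a i) - G (CP a i) * F (CS i a))"
    by (simp add: sum_negf[symmetric] algebra_simps)
  have "(\<Sum>m<N. \<Sum>n<N. \<Sum>p<N. \<Sum>q<N. G (CB m n) * F (CB p q) * Bbr K x m n p q)
      = (\<Sum>p<N. \<Sum>q<N. \<Sum>m<N. \<Sum>n<N. G (CB m n) * F (CB p q) * Bbr K x m n p q)"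
    by (rule swap22)
  also have "\<dots> = - (\<Sum>p<N. \<Sum>q<N. \<Sum>m<N. \<Sum>n<N. F (CB p q) * G (CB m n) * Bbr K x p q m n)"
    by (simp only: sum_negf[symmetric], intro sum.cong refl, simp add: Bbr_def algebra_simps)
  finally have 2: "(\<Sum>m<N. \<Sum>n<N. \<Sum>p<N. \<Sum>q<N. F (CB m n) * G (CB p q) * Bbr K x m n p q)
     = - (\<Sum>m<N. \<Sum>n<N. \<Sum>p<N. \<Sum>q<N. G (CB m n) * F (CB p q) * Bbr K x m n p q)"
    by simp
  show ?thesis unfolding PB_def 1 2 by simp
qed

lemma pbr_skew: "pbr N K f g x = - pbr N K g f x"
  by (simp add: pbr_PB PB_skew[of N K "dd f x"])

lemma Bbr_pf: "(\<lambda>x. Bbr K x m n p q) \<in> poly_fun N K" if "m < N" "n < N" "p < N" "q < N"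
proof -
  have s: "(\<lambda>x. \<Sum>a<K. pb x a j * ps x i a) \<in> poly_fun N K" if "i < N" "j < N" for i j
    using that by (intro pf_sum) (auto intro!: poly_fun.intros)
  show ?thesis unfolding Bbr_def
    by (rule pf_minus; cases "n = p"; cases "m = q") (use s that in \<open>auto intro: poly_fun.pf_const\<close>)
qed

lemma pbr_pf: "f \<in> poly_fun N K \<Longrightarrow> g \<in> poly_fun N K \<Longrightarrow> pbr N K f g \<in> poly_fun N K"
  unfolding pbr_def dB_dd dps_dd dpb_dd
  by (intro poly_fun.pf_add pf_sum pf_minus poly_fun.pf_mult dd_pf Bbr_pf) auto

lemma dd_const_fun[simp]: "dd (\<lambda>x. c) x = (\<lambda>u. 0)"
  by (rule ext) simp

lemma PB_add: "PB N K (\<lambda>u. F1 u + F2 u) G x = PB N K F1 G x + PB N K F2 G x"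
  using PB_lin[of N K 1 F1 1 F2 G x] by simp

lemma PB_diff: "PB N K (\<lambda>u. F1 u - F2 u) G x = PB N K F1 G x - PB N K F2 G x"
  using PB_lin[of N K 1 F1 "-1" F2 G x] by simp

lemma delta2[simp]: "(\<Sum>i<(N::nat). \<Sum>a<(K::nat). if i = m \<and> a = d then X i a else 0) = (if m < N \<and> d < K then X m d else (0::complex))"
proof -
  have "(\<Sum>i<N. \<Sum>a<K. if i = m \<and> a = d then X i a else 0) = (\<Sum>i<N. if i = m then (\<Sum>a<K. if a = d then X i a else 0) else 0)"
    by (intro sum.cong refl) auto
  then show ?thesis by (simp add: sum.delta)
qed

lemma delta_outer[simp]: "(\<Sum>i<(N::nat). \<Sum>j<(M::nat). if i = m then X i j else 0) = (if m < N then (\<Sum>j<M. X m j) else (0::complex))"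
proof -
  have "(\<Sum>i<N. \<Sum>j<M. if i = m then X i j else 0) = (\<Sum>i<N. if i = m then (\<Sum>j<M. X i j) else 0)"
    by (intro sum.cong refl) auto
  then show ?thesis by (simp add: sum.delta)
qed

lemma dd_Bm: "dd (\<lambda>x. Bm x i j) x u = (if u = CB i j then 1 else 0)"
  using dd_get[of "CB i j" x u] by simp
lemma dd_ps: "dd (\<lambda>x. ps x i a) x u = (if u = CS i a then 1 else 0)"
  using dd_get[of "CS i a" x u] by simp
lemma dd_pb: "dd (\<lambda>x. pb x a i) x u = (if u = CP a i then 1 else 0)"
  using dd_get[of "CP a i" x u] by simp

lemma dd_mult_fun: "f \<in> poly_fun N K \<Longrightarrow> g \<in> poly_fun N K \<Longrightarrow>
   dd (\<lambda>x. f x * g x) x = (\<lambda>u. f x * dd g x u + g x * dd f x u)"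
  by (rule ext) (simp add: dd_mult[where N=N and K=K])

lemma pbr_mult_left: "f \<in> poly_fun N K \<Longrightarrow> g \<in> poly_fun N K \<Longrightarrow>
   pbr N K (\<lambda>x. f x * g x) h x = f x * pbr N K g h x + g x * pbr N K f h x"
  by (simp add: pbr_PB dd_mult_fun PB_lin)

lemma pbr_add_left: "f \<in> poly_fun N K \<Longrightarrow> g \<in> poly_fun N K \<Longrightarrow>
   pbr N K (\<lambda>x. f x + g x) h x = pbr N K f h x + pbr N K g h x"
proof -
  assume a: "f \<in> poly_fun N K" "g \<in> poly_fun N K"
  have "dd (\<lambda>x. f x + g x) x = (\<lambda>u. dd f x u + dd g x u)"
    by (rule ext) (simp add: dd_add[OF a])
  then show ?thesis by (simp add: pbr_PB PB_add)
qed

lemma pbr_const_left[simp]: "pbr N K (\<lambda>x. c) h x = 0"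
  by (simp add: pbr_PB PB_zero)

lemma pbr_const_right[simp]: "pbr N K h (\<lambda>x. c) x = 0"
  by (subst pbr_skew) simp

lemma pbr_cmult_left: "f \<in> poly_fun N K \<Longrightarrow> pbr N K (\<lambda>x. c * f x) h x = c * pbr N K f h x"
  using pbr_mult_left[of "\<lambda>x. c" N K f h x] by (simp add: poly_fun.pf_const)

lemma pbr_minus_left: "f \<in> poly_fun N K \<Longrightarrow> g \<in> poly_fun N K \<Longrightarrow>
   pbr N K (\<lambda>x. f x - g x) h x = pbr N K f h x - pbr N K g h x"
proof -
  assume a: "f \<in> poly_fun N K" "g \<in> poly_fun N K"
  have "dd (\<lambda>x. f x - g x) x = (\<lambda>u. dd f x u - dd g x u)"
    by (rule ext) (simp add: dd_minus[OF a])
  then show ?thesis by (simp add: pbr_PB PB_diff)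
qed

lemma pbr_sum_left: "finite A \<Longrightarrow> (\<And>i. i \<in> A \<Longrightarrow> F i \<in> poly_fun N K) \<Longrightarrow>
   pbr N K (\<lambda>x. \<Sum>i\<in>A. F i x) h x = (\<Sum>i\<in>A. pbr N K (F i) h x)"
proof (induction A rule: finite_induct)
  case empty then show ?case by simp
next
  case (insert a A)
  have "pbr N K (\<lambda>x. \<Sum>i\<in>insert a A. F i x) h x = pbr N K (\<lambda>x. F a x + (\<Sum>i\<in>A. F i x)) h x"
    using insert by simp
  also have "\<dots> = pbr N K (F a) h x + pbr N K (\<lambda>x. \<Sum>i\<in>A. F i x) h x"
    by (rule pbr_add_left) (auto intro!: pf_sum insert.prems insert.hyps)
  finally show ?case using insert by simp
qed

lemma pbr_mult_right: "f \<in> poly_fun N K \<Longrightarrow> g \<in> poly_fun N K \<Longrightarrow>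
   pbr N K h (\<lambda>x. f x * g x) x = f x * pbr N K h g x + g x * pbr N K h f x"
  by (subst (1 2 3) pbr_skew) (simp add: pbr_mult_left)

lemma pbr_add_right: "f \<in> poly_fun N K \<Longrightarrow> g \<in> poly_fun N K \<Longrightarrow>
   pbr N K h (\<lambda>x. f x + g x) x = pbr N K h f x + pbr N K h g x"
  by (subst (1 2 3) pbr_skew) (simp add: pbr_add_left)

lemma pbr_minus_right: "f \<in> poly_fun N K \<Longrightarrow> g \<in> poly_fun N K \<Longrightarrow>
   pbr N K h (\<lambda>x. f x - g x) x = pbr N K h f x - pbr N K h g x"
  by (subst (1 2 3) pbr_skew) (simp add: pbr_minus_left)

lemma pbr_cmult_right: "f \<in> poly_fun N K \<Longrightarrow> pbr N K h (\<lambda>x. c * f x) x = c * pbr N K h f x"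
  by (subst (1 2) pbr_skew) (simp add: pbr_cmult_left)

lemma pbr_sum_right: "finite A \<Longrightarrow> (\<And>i. i \<in> A \<Longrightarrow> F i \<in> poly_fun N K) \<Longrightarrow>
   pbr N K h (\<lambda>x. \<Sum>i\<in>A. F i x) x = (\<Sum>i\<in>A. pbr N K h (F i) x)"
  by (subst pbr_skew) (simp add: pbr_sum_left sum_negf pbr_skew[of N K h])

lemma pbr_ps_right: "m < N \<Longrightarrow> d < K \<Longrightarrow> pbr N K f (\<lambda>x. ps x m d) x = - dd f x (CP d m)"
  by (simp add: pbr_PB PB_def dd_ps if_distrib sum.delta' cong: if_cong)

lemma if01: "(A::complex) * (if c then 1 else 0) * B = (if c then A * B else 0)"
  "(A::complex) * (if c then 1 else 0) = (if c then A else 0)"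
  "(if c then 1 else 0) * (A::complex) = (if c then A else 0)"
  by auto

lemma pbr_pb_right: "l < N \<Longrightarrow> c < K \<Longrightarrow> pbr N K f (\<lambda>x. pb x c l) x = dd f x (CS l c)"
proof -
  assume a: "l < N" "c < K"
  have "(\<Sum>i<N. \<Sum>a<K. dd f x (CS i a) * (if CP a i = CP c l then 1 else 0) - dd f x (CP a i) * (if CS i a = CP c l then 1 else 0))
     = (\<Sum>i<N. \<Sum>a<K. if i = l \<and> a = c then dd f x (CS i a) else 0)"
    by (intro sum.cong refl) auto
  then show ?thesis using a by (simp add: pbr_PB PB_def dd_pb)
qed

lemma pbr_Bm_right: "p < N \<Longrightarrow> q < N \<Longrightarrow>
  pbr N K f (\<lambda>x. Bm x p q) x = (\<Sum>m<N. \<Sum>n<N. dd f x (CB m n) * Bbr K x m n p q)"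
proof -
  assume a: "p < N" "q < N"
  have "(\<Sum>m<N. \<Sum>n<N. \<Sum>r<N. \<Sum>s<N. dd f x (CB m n) * (if CB r s = CB p q then 1 else 0) * Bbr K x m n r s)
     = (\<Sum>m<N. \<Sum>n<N. \<Sum>r<N. \<Sum>s<N. if r = p \<and> s = q then dd f x (CB m n) * Bbr K x m n r s else 0)"
    by (intro sum.cong refl) auto
  also have "\<dots> = (\<Sum>m<N. \<Sum>n<N. dd f x (CB m n) * Bbr K x m n p q)"
    using a by simp
  finally show ?thesis by (simp add: pbr_PB PB_def dd_Bm)
qed

lemma pbr_ps_left: "i < N \<Longrightarrow> a < K \<Longrightarrow> pbr N K (\<lambda>x. ps x i a) g x = dd g x (CP a i)"
  by (subst pbr_skew) (simp add: pbr_ps_right)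

lemma pbr_pb_left: "i < N \<Longrightarrow> a < K \<Longrightarrow> pbr N K (\<lambda>x. pb x a i) g x = - dd g x (CS i a)"
  by (subst pbr_skew) (simp add: pbr_pb_right)

lemma pbr_Bm_left: "m < N \<Longrightarrow> n < N \<Longrightarrow>
  pbr N K (\<lambda>x. Bm x m n) g x = (\<Sum>p<N. \<Sum>q<N. dd g x (CB p q) * Bbr K x m n p q)"
  by (subst pbr_skew) (simp add: pbr_Bm_right Bbr_skew[of K x m n] sum_negf[symmetric])

lemma Bt_fun: "(\<lambda>x. Bt K x p q) = (\<lambda>x. Bm x p q + (\<Sum>b<K. ps x p b * pb x b q))"
  by (simp add: Bt_def)

lemma Bt_pf: "p < N \<Longrightarrow> q < N \<Longrightarrow> (\<lambda>x. Bt K x p q) \<in> poly_fun N K"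
  unfolding Bt_fun by (intro poly_fun.intros pf_sum) (auto intro!: poly_fun.intros)

lemma dd_Bt: "p < N \<Longrightarrow> q < N \<Longrightarrow> dd (\<lambda>x. Bt K x p q) x u =
   (if u = CB p q then 1 else 0) + (\<Sum>b<K. ps x p b * (if u = CP b q then 1 else 0) + (if u = CS p b then 1 else 0) * pb x b q)"
proof -
  assume a: "p < N" "q < N"
  have "dd (\<lambda>x. \<Sum>b<K. ps x p b * pb x b q) x u = (\<Sum>b<K. dd (\<lambda>x. ps x p b * pb x b q) x u)"
    by (rule dd_sum[where N=N and K=K]) (use a in \<open>auto intro!: poly_fun.intros\<close>)
  also have "\<dots> = (\<Sum>b<K. ps x p b * (if u = CP b q then 1 else 0) + (if u = CS p b then 1 else 0) * pb x b q)"
    by (intro sum.cong refl, subst dd_mult[where N=N and K=K]) (use a in \<open>auto intro!: poly_fun.intros simp: dd_ps dd_pb\<close>)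
  finally show ?thesis unfolding Bt_fun
    by (subst dd_add[where N=N and K=K]) (use a in \<open>auto intro!: pf_sum poly_fun.intros simp: dd_Bm\<close>)
qed

lemma dd_Bt_CB: "p < N \<Longrightarrow> q < N \<Longrightarrow> dd (\<lambda>x. Bt K x p q) x (CB m n) = (if m = p \<and> n = q then 1 else 0)"
  by (simp add: dd_Bt[where N=N])

lemma dd_Bt_CS: "p < N \<Longrightarrow> q < N \<Longrightarrow> a < K \<Longrightarrow> dd (\<lambda>x. Bt K x p q) x (CS i a) = (if i = p then pb x a q else 0)"
  by (simp add: dd_Bt[where N=N] if01 cong: if_cong)

lemma dd_Bt_CP: "p < N \<Longrightarrow> q < N \<Longrightarrow> a < K \<Longrightarrow> dd (\<lambda>x. Bt K x p q) x (CP a i) = (if i = q then ps x p a else 0)"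
  by (simp add: dd_Bt[where N=N] if01 cong: if_cong)

lemma br_ps_Bt: "i < N \<Longrightarrow> a < K \<Longrightarrow> p < N \<Longrightarrow> q < N \<Longrightarrow>
  pbr N K (\<lambda>x. ps x i a) (\<lambda>x. Bt K x p q) x = (if i = q then ps x p a else 0)"
  by (simp add: pbr_ps_left dd_Bt_CP[where N=N])

lemma br_pb_Bt: "i < N \<Longrightarrow> a < K \<Longrightarrow> p < N \<Longrightarrow> q < N \<Longrightarrow>
  pbr N K (\<lambda>x. pb x a i) (\<lambda>x. Bt K x p q) x = - (if i = p then pb x a q else 0)"
  by (simp add: pbr_pb_left dd_Bt_CS[where N=N])

lemma br_Bm_Bt: "m < N \<Longrightarrow> n < N \<Longrightarrow> p < N \<Longrightarrow> q < N \<Longrightarrow>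
  pbr N K (\<lambda>x. Bm x m n) (\<lambda>x. Bt K x p q) x = Bbr K x m n p q"
proof -
  assume a: "m < N" "n < N" "p < N" "q < N"
  have "(\<Sum>r<N. \<Sum>s<N. dd (\<lambda>x. Bt K x p q) x (CB r s) * Bbr K x m n r s)
     = (\<Sum>r<N. \<Sum>s<N. if r = p \<and> s = q then Bbr K x m n r s else 0)"
    using a by (intro sum.cong refl) (simp add: dd_Bt_CB[where N=N])
  then show ?thesis using a by (simp add: pbr_Bm_left)
qed

lemma br_Bt_Bt: "m < N \<Longrightarrow> n < N \<Longrightarrow> p < N \<Longrightarrow> q < N \<Longrightarrow>
  pbr N K (\<lambda>x. Bt K x m n) (\<lambda>x. Bt K x p q) x = 0"
proof -
  assume a: "m < N" "n < N" "p < N" "q < N"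
  have pf1: "(\<lambda>x. \<Sum>b<K. ps x m b * pb x b n) \<in> poly_fun N K"
    using a by (intro pf_sum) (auto intro!: poly_fun.intros)
  have "pbr N K (\<lambda>x. Bt K x m n) (\<lambda>x. Bt K x p q) x
     = pbr N K (\<lambda>x. Bm x m n) (\<lambda>x. Bt K x p q) x + pbr N K (\<lambda>x. \<Sum>b<K. ps x m b * pb x b n) (\<lambda>x. Bt K x p q) x"
    unfolding Bt_fun[of K m n] by (rule pbr_add_left) (use a pf1 in \<open>auto intro: poly_fun.intros\<close>)
  also have "pbr N K (\<lambda>x. \<Sum>b<K. ps x m b * pb x b n) (\<lambda>x. Bt K x p q) x
     = (\<Sum>b<K. pbr N K (\<lambda>x. ps x m b * pb x b n) (\<lambda>x. Bt K x p q) x)"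
    by (rule pbr_sum_left) (use a in \<open>auto intro!: poly_fun.intros\<close>)
  also have "\<dots> = (\<Sum>b<K. ps x m b * (- (if n = p then pb x b q else 0)) + pb x b n * (if m = q then ps x p b else 0))"
    by (intro sum.cong refl, subst pbr_mult_left) (use a in \<open>auto intro!: poly_fun.intros simp: br_ps_Bt br_pb_Bt\<close>)
  finally show ?thesis using a
    by (cases "n = p"; cases "m = q") (simp_all add: br_Bm_Bt Bbr_def sum.distrib sum_subtractf sum_negf algebra_simps)
qed

definition mp :: "nat \<Rightarrow> nat \<Rightarrow> nat \<Rightarrow> nat \<Rightarrow> nat \<Rightarrow> rep \<Rightarrow> complex" where
  "mp N K k i j = (\<lambda>x. mpow N (Bt K x) k i j)"

definition cv :: "nat \<Rightarrow> nat \<Rightarrow> rep \<Rightarrow> nat \<Rightarrow> nat \<Rightarrow> nat \<Rightarrow> complex" where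
  "cv N K x s a l = (\<Sum>r<N. mpow N (Bt K x) s l r * ps x r a)"

definition rv :: "nat \<Rightarrow> nat \<Rightarrow> rep \<Rightarrow> nat \<Rightarrow> nat \<Rightarrow> nat \<Rightarrow> complex" where
  "rv N K x s a l = (\<Sum>r<N. pb x a r * mpow N (Bt K x) s r l)"

lemma mp_Suc: "mp N K (Suc k) i j = (\<lambda>x. \<Sum>r<N. mp N K k i r x * Bt K x r j)"
  by (simp add: mp_def mmul_def)

lemma mp_0: "mp N K 0 i j = (\<lambda>x. if i = j then 1 else 0)"
  by (simp add: mp_def)

lemma mp_pf: "j < N \<Longrightarrow> mp N K k i j \<in> poly_fun N K"
proof (induction k arbitrary: j)
  case 0 then show ?case by (simp add: mp_0 poly_fun.pf_const)
next
  case (Suc k) then show ?case unfolding mp_Suc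
    by (intro pf_sum poly_fun.pf_mult Bt_pf) auto
qed

lemma mp_pf'[intro]: "j < N \<Longrightarrow> (\<lambda>x. mpow N (Bt K x) k i j) \<in> poly_fun N K"
  using mp_pf[of j N K k i] by (simp add: mp_def)

lemma mpow_Suc': "mpow N A (Suc k) i j = (\<Sum>r<N. mpow N A k i r * A r j)"
  by (simp add: mmul_def)

lemma mpow_add: "m < N \<Longrightarrow> (\<Sum>j<N. mpow N A p i j * mpow N A r j m) = mpow N A (p + r) i m"
proof (induction r arbitrary: m)
  case 0 then show ?case by (simp add: if01 cong: if_cong)
next
  case (Suc r)
  have "(\<Sum>j<N. mpow N A p i j * mpow N A (Suc r) j m) = (\<Sum>j<N. \<Sum>t<N. mpow N A p i j * mpow N A r j t * A t m)"
    by (simp del: mpow.simps add: mpow_Suc' sum_distrib_left mult.assoc)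
  also have "\<dots> = (\<Sum>t<N. \<Sum>j<N. mpow N A p i j * mpow N A r j t * A t m)"
    by (rule sum.swap)
  also have "\<dots> = (\<Sum>t<N. mpow N A (p + r) i t * A t m)"
    by (intro sum.cong refl) (simp add: Suc.IH[symmetric] sum_distrib_right)
  finally show ?case by (simp del: mpow.simps add: mpow_Suc')
qed

lemma br_ps_mp: "i < N \<Longrightarrow> a < K \<Longrightarrow> m < N \<Longrightarrow>
  pbr N K (\<lambda>x. ps x i a) (mp N K k l m) x = (\<Sum>s<k. cv N K x s a l * mpow N (Bt K x) (k - 1 - s) i m)"
proof (induction k arbitrary: m)
  case 0 then show ?case by (simp add: mp_0)
next
  case (Suc k)
  have "pbr N K (\<lambda>x. ps x i a) (mp N K (Suc k) l m) x = (\<Sum>r<N. pbr N K (\<lambda>x. ps x i a) (\<lambda>x. mp N K k l r x * Bt K x r m) x)"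
    unfolding mp_Suc by (rule pbr_sum_right) (use Suc.prems in \<open>auto intro!: poly_fun.intros mp_pf Bt_pf\<close>)
  also have "\<dots> = (\<Sum>r<N. mp N K k l r x * (if i = m then ps x r a else 0) + Bt K x r m * (\<Sum>s<k. cv N K x s a l * mpow N (Bt K x) (k - 1 - s) i r))"
    by (intro sum.cong refl, subst pbr_mult_right) (use Suc in \<open>auto intro!: mp_pf Bt_pf simp: br_ps_Bt\<close>)
  also have "\<dots> = (if i = m then cv N K x k a l else 0) + (\<Sum>s<k. cv N K x s a l * (\<Sum>r<N. mpow N (Bt K x) (k - 1 - s) i r * Bt K x r m))"
  proof -
    have 1: "(\<Sum>r<N. mp N K k l r x * (if i = m then ps x r a else 0)) = (if i = m then cv N K x k a l else 0)"
      by (simp add: cv_def mp_def)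
    have 2: "(\<Sum>r<N. Bt K x r m * (\<Sum>s<k. cv N K x s a l * mpow N (Bt K x) (k - 1 - s) i r))
       = (\<Sum>s<k. cv N K x s a l * (\<Sum>r<N. mpow N (Bt K x) (k - 1 - s) i r * Bt K x r m))"
      by (simp add: sum_distrib_left sum.swap[of _ "{..<N}"] algebra_simps)
    show ?thesis by (simp only: sum.distrib 1 2)
  qed
  also have "\<dots> = (if i = m then cv N K x k a l else 0) + (\<Sum>s<k. cv N K x s a l * mpow N (Bt K x) (k - s) i m)"
    by (intro arg_cong2[where f="(+)"] refl sum.cong) (auto simp: mpow_Suc'[symmetric] Suc_diff_Suc)
  finally show ?case by simp
qed

lemma rv_Suc: "rv N K x (Suc j) a m = (\<Sum>r<N. rv N K x j a r * Bt K x r m)"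
proof -
  have "rv N K x (Suc j) a m = (\<Sum>r<N. \<Sum>t<N. pb x a r * mpow N (Bt K x) j r t * Bt K x t m)"
    by (simp del: mpow.simps add: rv_def mpow_Suc' sum_distrib_left mult.assoc)
  also have "\<dots> = (\<Sum>t<N. \<Sum>r<N. pb x a r * mpow N (Bt K x) j r t * Bt K x t m)"
    by (rule sum.swap)
  finally show ?thesis by (simp add: rv_def sum_distrib_right)
qed

lemma rv_0: "m < N \<Longrightarrow> rv N K x 0 a m = pb x a m"
  by (simp add: rv_def if01 cong: if_cong)

lemma br_pb_mp: "i < N \<Longrightarrow> a < K \<Longrightarrow> m < N \<Longrightarrow>
  pbr N K (\<lambda>x. pb x a i) (mp N K k l m) x = - (\<Sum>s<k. mpow N (Bt K x) s l i * rv N K x (k - 1 - s) a m)"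
proof (induction k arbitrary: m)
  case 0 then show ?case by (simp add: mp_0)
next
  case (Suc k)
  have "pbr N K (\<lambda>x. pb x a i) (mp N K (Suc k) l m) x = (\<Sum>r<N. pbr N K (\<lambda>x. pb x a i) (\<lambda>x. mp N K k l r x * Bt K x r m) x)"
    unfolding mp_Suc by (rule pbr_sum_right) (use Suc.prems in \<open>auto intro!: poly_fun.intros mp_pf Bt_pf\<close>)
  also have "\<dots> = (\<Sum>r<N. mp N K k l r x * (- (if i = r then pb x a m else 0)) + Bt K x r m * (- (\<Sum>s<k. mpow N (Bt K x) s l i * rv N K x (k - 1 - s) a r)))"
    by (intro sum.cong refl, subst pbr_mult_right) (use Suc in \<open>auto intro!: mp_pf Bt_pf simp: br_pb_Bt\<close>)
  also have "\<dots> = - (mpow N (Bt K x) k l i * rv N K x 0 a m) - (\<Sum>s<k. mpow N (Bt K x) s l i * (\<Sum>r<N. rv N K x (k - 1 - s) a r * Bt K x r m))"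
  proof -
    have 1: "(\<Sum>r<N. mp N K k l r x * (- (if i = r then pb x a m else 0))) = - (mpow N (Bt K x) k l i * rv N K x 0 a m)"
      using Suc.prems by (simp add: mp_def rv_0 if_distrib cong: if_cong)
    have 2: "(\<Sum>r<N. Bt K x r m * (- (\<Sum>s<k. mpow N (Bt K x) s l i * rv N K x (k - 1 - s) a r)))
       = - (\<Sum>s<k. mpow N (Bt K x) s l i * (\<Sum>r<N. rv N K x (k - 1 - s) a r * Bt K x r m))"
      by (simp add: sum_distrib_left sum_negf sum.swap[of _ "{..<N}"] algebra_simps)
    show ?thesis by (simp only: sum.distrib 1 2) simp
  qed
  also have "\<dots> = - (mpow N (Bt K x) k l i * rv N K x 0 a m) - (\<Sum>s<k. mpow N (Bt K x) s l i * rv N K x (k - s) a m)"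
    by (intro arg_cong2[where f="(-)"] refl sum.cong) (auto simp: rv_Suc[symmetric] Suc_diff_Suc)
  finally show ?case by (simp add: algebra_simps)
qed

lemma br_Bt_mp: "p < N \<Longrightarrow> q < N \<Longrightarrow> m < N \<Longrightarrow>
  pbr N K (\<lambda>x. Bt K x p q) (mp N K k l m) x = 0"
proof (induction k arbitrary: m)
  case 0 then show ?case by (simp add: mp_0)
next
  case (Suc k)
  have "pbr N K (\<lambda>x. Bt K x p q) (mp N K (Suc k) l m) x = (\<Sum>r<N. pbr N K (\<lambda>x. Bt K x p q) (\<lambda>x. mp N K k l r x * Bt K x r m) x)"
    unfolding mp_Suc by (rule pbr_sum_right) (use Suc.prems in \<open>auto intro!: poly_fun.intros mp_pf Bt_pf\<close>)
  also have "\<dots> = 0"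
    by (intro sum.neutral ballI, subst pbr_mult_right) (use Suc in \<open>auto intro!: mp_pf Bt_pf simp: br_Bt_Bt\<close>)
  finally show ?case .
qed

lemma br_mp_mp: "j < N \<Longrightarrow> m < N \<Longrightarrow> pbr N K (mp N K k' i j) (mp N K k l m) x = 0"
proof (induction k' arbitrary: j)
  case 0 then show ?case by (simp add: mp_0)
next
  case (Suc k')
  have "pbr N K (mp N K (Suc k') i j) (mp N K k l m) x = (\<Sum>r<N. pbr N K (\<lambda>x. mp N K k' i r x * Bt K x r j) (mp N K k l m) x)"
    unfolding mp_Suc by (rule pbr_sum_left) (use Suc.prems in \<open>auto intro!: poly_fun.intros mp_pf Bt_pf\<close>)
  also have "\<dots> = 0"
    by (intro sum.neutral ballI, subst pbr_mult_left) (use Suc in \<open>auto intro!: mp_pf Bt_pf simp: br_Bt_mp\<close>)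
  finally show ?case .
qed

definition sS :: "nat \<Rightarrow> nat \<Rightarrow> nat \<Rightarrow> nat \<Rightarrow> nat \<Rightarrow> rep \<Rightarrow> complex" where
  "sS N K n a d = (\<lambda>x. \<Sum>i<N. \<Sum>j<N. pb x a i * mpow N (Bt K x) n i j * ps x j d)"

lemma sS_pf: "a < K \<Longrightarrow> d < K \<Longrightarrow> sS N K n a d \<in> poly_fun N K"
  unfolding sS_def by (intro pf_sum poly_fun.pf_mult) (auto intro!: poly_fun.intros)

lemma L1: "(\<Sum>i<N. pb x a i * cv N K x s d i) = sS N K s a d x"
  by (simp add: cv_def sS_def sum_distrib_left mult.assoc)

lemma L2: "(\<Sum>j<N. rv N K x n c j * ps x j b) = sS N K n c b x"
proof -
  have "(\<Sum>j<N. rv N K x n c j * ps x j b) = (\<Sum>j<N. \<Sum>r<N. pb x c r * mpow N (Bt K x) n r j * ps x j b)"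
    by (simp add: rv_def sum_distrib_right)
  also have "\<dots> = (\<Sum>r<N. \<Sum>j<N. pb x c r * mpow N (Bt K x) n r j * ps x j b)"
    by (rule sum.swap)
  finally show ?thesis by (simp add: sS_def)
qed

lemma L3: "m < N \<Longrightarrow> (\<Sum>i<N. pb x a i * (\<Sum>j<N. mpow N (Bt K x) p i j * mpow N (Bt K x) r j m)) = rv N K x (p + r) a m"
  by (simp add: mpow_add rv_def)

lemma L4: "(\<Sum>i<N. mpow N (Bt K x) s l i * cv N K x p b i) = cv N K x (s + p) b l"
proof -
  have "(\<Sum>i<N. mpow N (Bt K x) s l i * cv N K x p b i) = (\<Sum>i<N. \<Sum>j<N. mpow N (Bt K x) s l i * mpow N (Bt K x) p i j * ps x j b)"
    by (simp add: cv_def sum_distrib_left mult.assoc)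
  also have "\<dots> = (\<Sum>j<N. \<Sum>i<N. mpow N (Bt K x) s l i * mpow N (Bt K x) p i j * ps x j b)"
    by (rule sum.swap)
  also have "\<dots> = (\<Sum>j<N. mpow N (Bt K x) (s + p) l j * ps x j b)"
    by (intro sum.cong refl) (simp add: mpow_add[symmetric] sum_distrib_right)
  finally show ?thesis by (simp add: cv_def)
qed

lemma L5: "m < N \<Longrightarrow> (\<Sum>l<N. rv N K x r a l * mpow N (Bt K x) q l m) = rv N K x (r + q) a m"
proof -
  assume m: "m < N"
  have "(\<Sum>l<N. rv N K x r a l * mpow N (Bt K x) q l m) = (\<Sum>l<N. \<Sum>i<N. pb x a i * mpow N (Bt K x) r i l * mpow N (Bt K x) q l m)"
    by (simp add: rv_def sum_distrib_right)
  also have "\<dots> = (\<Sum>i<N. \<Sum>l<N. pb x a i * mpow N (Bt K x) r i l * mpow N (Bt K x) q l m)"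
    by (rule sum.swap)
  also have "\<dots> = (\<Sum>i<N. pb x a i * mpow N (Bt K x) (r + q) i m)"
    by (intro sum.cong refl) (simp add: mpow_add[symmetric, OF m] sum_distrib_left mult.assoc)
  finally show ?thesis by (simp add: rv_def)
qed

lemma sS_fun: "sS N K n a b = (\<lambda>x. \<Sum>i<N. \<Sum>j<N. (pb x a i * mp N K n i j x) * ps x j b)"
  by (simp add: sS_def mp_def)

lemma br_sS_left: "a < K \<Longrightarrow> b < K \<Longrightarrow>
  pbr N K (sS N K p a b) h x = (\<Sum>i<N. \<Sum>j<N. pb x a i * mpow N (Bt K x) p i j * pbr N K (\<lambda>x. ps x j b) h x
     + ps x j b * (pb x a i * pbr N K (mp N K p i j) h x + mpow N (Bt K x) p i j * pbr N K (\<lambda>x. pb x a i) h x))"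
  unfolding sS_fun
  apply (subst pbr_sum_left, simp, rule pf_sum, simp, (auto intro!: poly_fun.intros mp_pf)[1])
  apply (intro sum.cong refl)
  apply (subst pbr_sum_left, simp, (auto intro!: poly_fun.intros mp_pf)[1])
  apply (intro sum.cong refl)
  apply (subst pbr_mult_left, (auto intro!: poly_fun.intros mp_pf)[2])
  apply (subst pbr_mult_left, (auto intro!: poly_fun.intros mp_pf)[2])
  apply (simp add: mp_def)
  done

lemma br_sS_right: "c < K \<Longrightarrow> d < K \<Longrightarrow>
  pbr N K h (sS N K q c d) x = (\<Sum>l<N. \<Sum>m<N. pb x c l * mpow N (Bt K x) q l m * pbr N K h (\<lambda>x. ps x m d) x
     + ps x m d * (pb x c l * pbr N K h (mp N K q l m) x + mpow N (Bt K x) q l m * pbr N K h (\<lambda>x. pb x c l) x))"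
  apply (subst pbr_skew, subst br_sS_left, assumption+)
  apply (simp add: sum_negf[symmetric] pbr_skew[of N K h])
  apply (intro sum.cong refl)
  apply (simp add: algebra_simps)
  done

lemma br_ps_ps: "j < N \<Longrightarrow> b < K \<Longrightarrow> m < N \<Longrightarrow> d < K \<Longrightarrow> pbr N K (\<lambda>x. ps x j b) (\<lambda>x. ps x m d) x = 0"
  by (simp add: pbr_ps_right dd_ps)
lemma br_pb_ps: "i < N \<Longrightarrow> a < K \<Longrightarrow> m < N \<Longrightarrow> d < K \<Longrightarrow>
   pbr N K (\<lambda>x. pb x a i) (\<lambda>x. ps x m d) x = - (if i = m \<and> a = d then 1 else 0)"
  by (simp add: pbr_ps_right dd_pb)
lemma br_ps_pb: "j < N \<Longrightarrow> b < K \<Longrightarrow> l < N \<Longrightarrow> c < K \<Longrightarrow>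
   pbr N K (\<lambda>x. ps x j b) (\<lambda>x. pb x c l) x = (if j = l \<and> b = c then 1 else 0)"
  by (simp add: pbr_pb_right dd_ps)
lemma br_pb_pb: "i < N \<Longrightarrow> a < K \<Longrightarrow> l < N \<Longrightarrow> c < K \<Longrightarrow> pbr N K (\<lambda>x. pb x a i) (\<lambda>x. pb x c l) x = 0"
  by (simp add: pbr_pb_right dd_pb)

lemma A1: "a < K \<Longrightarrow> b < K \<Longrightarrow> m < N \<Longrightarrow> d < K \<Longrightarrow>
  pbr N K (sS N K p a b) (\<lambda>x. ps x m d) x = - (if a = d then cv N K x p b m else 0) - (\<Sum>s<p. sS N K s a d x * cv N K x (p - 1 - s) b m)"
proof -
  assume as: "a < K" "b < K" "m < N" "d < K"
  have "pbr N K (sS N K p a b) (\<lambda>x. ps x m d) x = (\<Sum>i<N. \<Sum>j<N.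
      ps x j b * (pb x a i * (- (\<Sum>s<p. cv N K x s d i * mpow N (Bt K x) (p - 1 - s) m j)) + mpow N (Bt K x) p i j * (- (if i = m \<and> a = d then 1 else 0))))"
    using as by (simp add: br_sS_left br_ps_ps br_pb_ps pbr_skew[of N K "mp N K p _ _"] br_ps_mp del: mult_minus_right mult_minus_left)
  also have "\<dots> = - (\<Sum>s<p. (\<Sum>i<N. pb x a i * cv N K x s d i) * (\<Sum>j<N. mpow N (Bt K x) (p - 1 - s) m j * ps x j b))
        - (\<Sum>i<N. \<Sum>j<N. if i = m \<and> a = d then ps x j b * mpow N (Bt K x) p i j else 0)"
  proof -
    have "(\<Sum>i<N. \<Sum>j<N. ps x j b * (pb x a i * (- (\<Sum>s<p. cv N K x s d i * mpow N (Bt K x) (p - 1 - s) m j))))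
      = - (\<Sum>i<N. \<Sum>j<N. \<Sum>s<p. (pb x a i * cv N K x s d i) * (mpow N (Bt K x) (p - 1 - s) m j * ps x j b))"
      by (simp add: sum_negf sum_distrib_left algebra_simps)
    also have "\<dots> = - (\<Sum>s<p. \<Sum>i<N. \<Sum>j<N. (pb x a i * cv N K x s d i) * (mpow N (Bt K x) (p - 1 - s) m j * ps x j b))"
      by (simp add: sum.swap[of _ "{..<p}"])
    also have "\<dots> = - (\<Sum>s<p. (\<Sum>i<N. pb x a i * cv N K x s d i) * (\<Sum>j<N. mpow N (Bt K x) (p - 1 - s) m j * ps x j b))"
      by (simp add: sum_product)
    finally show ?thesis
      by (simp add: sum.distrib sum_subtractf ring_distribs if_distrib[of "\<lambda>z. _ * z"] cong: if_cong)
  qed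
  also have "\<dots> = - (\<Sum>s<p. sS N K s a d x * cv N K x (p - 1 - s) b m) - (if a = d then cv N K x p b m else 0)"
    using as by (simp only: L1) (cases "a = d"; simp add: cv_def mult.commute)
  finally show ?thesis by simp
qed

lemma A2: "a < K \<Longrightarrow> b < K \<Longrightarrow> l < N \<Longrightarrow> c < K \<Longrightarrow>
  pbr N K (sS N K p a b) (\<lambda>x. pb x c l) x = (if b = c then rv N K x p a l else 0) + (\<Sum>s<p. rv N K x s a l * sS N K (p - 1 - s) c b x)"
proof -
  assume as: "a < K" "b < K" "l < N" "c < K"
  have "pbr N K (sS N K p a b) (\<lambda>x. pb x c l) x = (\<Sum>i<N. \<Sum>j<N.
      pb x a i * mpow N (Bt K x) p i j * (if j = l \<and> b = c then 1 else 0) + ps x j b * (pb x a i * (\<Sum>s<p. mpow N (Bt K x) s i l * rv N K x (p - 1 - s) c j)))"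
    using as by (simp add: br_sS_left br_ps_pb br_pb_pb pbr_skew[of N K "mp N K p _ _"] br_pb_mp del: mult_minus_right mult_minus_left)
  also have "\<dots> = (\<Sum>i<N. \<Sum>j<N. if j = l \<and> b = c then pb x a i * mpow N (Bt K x) p i j else 0)
       + (\<Sum>s<p. (\<Sum>i<N. pb x a i * mpow N (Bt K x) s i l) * (\<Sum>j<N. rv N K x (p - 1 - s) c j * ps x j b))"
  proof -
    have "(\<Sum>i<N. \<Sum>j<N. ps x j b * (pb x a i * (\<Sum>s<p. mpow N (Bt K x) s i l * rv N K x (p - 1 - s) c j)))
      = (\<Sum>i<N. \<Sum>j<N. \<Sum>s<p. (pb x a i * mpow N (Bt K x) s i l) * (rv N K x (p - 1 - s) c j * ps x j b))"
      by (simp add: sum_distrib_left algebra_simps)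
    also have "\<dots> = (\<Sum>s<p. \<Sum>i<N. \<Sum>j<N. (pb x a i * mpow N (Bt K x) s i l) * (rv N K x (p - 1 - s) c j * ps x j b))"
      by (simp add: sum.swap[of _ "{..<p}"])
    also have "\<dots> = (\<Sum>s<p. (\<Sum>i<N. pb x a i * mpow N (Bt K x) s i l) * (\<Sum>j<N. rv N K x (p - 1 - s) c j * ps x j b))"
      by (simp add: sum_product)
    finally have e: "(\<Sum>i<N. \<Sum>j<N. ps x j b * (pb x a i * (\<Sum>s<p. mpow N (Bt K x) s i l * rv N K x (p - 1 - s) c j)))
      = (\<Sum>s<p. (\<Sum>i<N. pb x a i * mpow N (Bt K x) s i l) * (\<Sum>j<N. rv N K x (p - 1 - s) c j * ps x j b))" .
    have f: "(\<Sum>i<N. \<Sum>j<N. pb x a i * mpow N (Bt K x) p i j * (if j = l \<and> b = c then 1 else 0))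
       = (\<Sum>i<N. \<Sum>j<N. if j = l \<and> b = c then pb x a i * mpow N (Bt K x) p i j else 0)"
      by (intro sum.cong refl) auto
    show ?thesis by (simp only: sum.distrib e f)
  qed
  also have "\<dots> = (if b = c then rv N K x p a l else 0) + (\<Sum>s<p. rv N K x s a l * sS N K (p - 1 - s) c b x)"
    using as by (simp only: L2) (cases "b = c"; simp add: rv_def)
  finally show ?thesis .
qed

lemma A3: "a < K \<Longrightarrow> b < K \<Longrightarrow> m < N \<Longrightarrow>
  pbr N K (sS N K p a b) (mp N K q l m) x = (\<Sum>s<q. cv N K x s b l * rv N K x (p + (q - 1 - s)) a m)
      - (\<Sum>s<q. cv N K x (s + p) b l * rv N K x (q - 1 - s) a m)"
proof -
  assume as: "a < K" "b < K" "m < N"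
  have "pbr N K (sS N K p a b) (mp N K q l m) x = (\<Sum>i<N. \<Sum>j<N.
      pb x a i * mpow N (Bt K x) p i j * (\<Sum>s<q. cv N K x s b l * mpow N (Bt K x) (q - 1 - s) j m)
      - ps x j b * (mpow N (Bt K x) p i j * (\<Sum>s<q. mpow N (Bt K x) s l i * rv N K x (q - 1 - s) a m)))"
    using as by (simp add: br_sS_left br_ps_mp br_pb_mp br_mp_mp del: mult_minus_right mult_minus_left)
  also have "\<dots> = (\<Sum>s<q. cv N K x s b l * (\<Sum>i<N. pb x a i * (\<Sum>j<N. mpow N (Bt K x) p i j * mpow N (Bt K x) (q - 1 - s) j m)))
      - (\<Sum>s<q. (\<Sum>i<N. mpow N (Bt K x) s l i * cv N K x p b i) * rv N K x (q - 1 - s) a m)"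
  proof -
    have e1: "(\<Sum>i<N. \<Sum>j<N. pb x a i * mpow N (Bt K x) p i j * (\<Sum>s<q. cv N K x s b l * mpow N (Bt K x) (q - 1 - s) j m))
       = (\<Sum>s<q. cv N K x s b l * (\<Sum>i<N. pb x a i * (\<Sum>j<N. mpow N (Bt K x) p i j * mpow N (Bt K x) (q - 1 - s) j m)))"
    proof -
      have "(\<Sum>i<N. \<Sum>j<N. pb x a i * mpow N (Bt K x) p i j * (\<Sum>s<q. cv N K x s b l * mpow N (Bt K x) (q - 1 - s) j m))
        = (\<Sum>i<N. \<Sum>j<N. \<Sum>s<q. cv N K x s b l * (pb x a i * (mpow N (Bt K x) p i j * mpow N (Bt K x) (q - 1 - s) j m)))"
        by (simp add: sum_distrib_left algebra_simps)
      also have "\<dots> = (\<Sum>s<q. \<Sum>i<N. \<Sum>j<N. cv N K x s b l * (pb x a i * (mpow N (Bt K x) p i j * mpow N (Bt K x) (q - 1 - s) j m)))"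
        by (simp add: sum.swap[of _ "{..<q}"])
      finally show ?thesis by (simp add: sum_distrib_left)
    qed
    have e2: "(\<Sum>i<N. \<Sum>j<N. ps x j b * (mpow N (Bt K x) p i j * (\<Sum>s<q. mpow N (Bt K x) s l i * rv N K x (q - 1 - s) a m)))
       = (\<Sum>s<q. (\<Sum>i<N. mpow N (Bt K x) s l i * cv N K x p b i) * rv N K x (q - 1 - s) a m)"
    proof -
      have "(\<Sum>i<N. \<Sum>j<N. ps x j b * (mpow N (Bt K x) p i j * (\<Sum>s<q. mpow N (Bt K x) s l i * rv N K x (q - 1 - s) a m)))
        = (\<Sum>i<N. \<Sum>s<q. \<Sum>j<N. (mpow N (Bt K x) s l i * rv N K x (q - 1 - s) a m) * (mpow N (Bt K x) p i j * ps x j b))"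
        by (simp add: sum_distrib_left sum.swap[of _ "{..<q}"] algebra_simps)
      also have "\<dots> = (\<Sum>s<q. \<Sum>i<N. (mpow N (Bt K x) s l i * rv N K x (q - 1 - s) a m) * cv N K x p b i)"
        by (simp add: sum.swap[of _ "{..<q}"] sum_distrib_left[symmetric] cv_def)
      finally show ?thesis by (simp add: sum_distrib_right sum_distrib_left algebra_simps)
    qed
    show ?thesis by (simp only: sum_subtractf e1 e2)
  qed
  also have "\<dots> = (\<Sum>s<q. cv N K x s b l * rv N K x (p + (q - 1 - s)) a m)
      - (\<Sum>s<q. cv N K x (s + p) b l * rv N K x (q - 1 - s) a m)"
    using as by (simp only: L3 L4)
  finally show ?thesis .
qed

lemma swap3: "(\<Sum>l<(N::nat). \<Sum>m<(N::nat). \<Sum>s<(p::nat). F l m s) = (\<Sum>s<p. \<Sum>l<N. \<Sum>m<N. (F l m s :: complex))"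
  by (simp add: sum.swap[of _ "{..<p}"])

lemma H1: "(\<Sum>l<(N::nat). \<Sum>m<(N::nat). X l m * (\<Sum>s<(p::nat). G s * Y s l m)) = (\<Sum>s<p. G s * (\<Sum>l<N. \<Sum>m<N. X l m * (Y s l m :: complex)))"
proof -
  have "(\<Sum>l<N. \<Sum>m<N. X l m * (\<Sum>s<p. G s * Y s l m)) = (\<Sum>l<N. \<Sum>m<N. \<Sum>s<p. G s * (X l m * Y s l m))"
    by (simp add: sum_distrib_left algebra_simps)
  also have "\<dots> = (\<Sum>s<p. \<Sum>l<N. \<Sum>m<N. G s * (X l m * Y s l m))" by (rule swap3)
  finally show ?thesis by (simp add: sum_distrib_left)
qed

lemma split3: "(\<Sum>l<(N::nat). \<Sum>m<(N::nat). X l m + W l m * (Y l m + Z l m)) =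
   (\<Sum>l<N. \<Sum>m<N. X l m) + (\<Sum>l<N. \<Sum>m<N. W l m * Y l m) + (\<Sum>l<N. \<Sum>m<N. W l m * (Z l m :: complex))"
  by (simp add: distrib_left sum.distrib)

lemma B_step: "a < K \<Longrightarrow> b < K \<Longrightarrow> c < K \<Longrightarrow> d < K \<Longrightarrow>
  pbr N K (sS N K p a b) (sS N K q c d) x =
    (if b = c then sS N K (p + q) a d x else 0) - (if a = d then sS N K (q + p) c b x else 0)
  + (\<Sum>s<p. sS N K (s + q) a d x * sS N K (p - 1 - s) c b x) - (\<Sum>s<p. sS N K s a d x * sS N K (q + (p - 1 - s)) c b x)
  + (\<Sum>s<q. sS N K s c b x * sS N K (p + (q - 1 - s)) a d x) - (\<Sum>s<q. sS N K (s + p) c b x * sS N K (q - 1 - s) a d x)"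
proof -
  assume as: "a < K" "b < K" "c < K" "d < K"
  let ?M = "mpow N (Bt K x)"
  let ?S = "\<lambda>n a d. sS N K n a d x"
  have "pbr N K (sS N K p a b) (sS N K q c d) x = (\<Sum>l<N. \<Sum>m<N.
       pb x c l * ?M q l m * (- (if a = d then cv N K x p b m else 0) - (\<Sum>s<p. ?S s a d * cv N K x (p - 1 - s) b m))
     + ps x m d * (pb x c l * ((\<Sum>s<q. cv N K x s b l * rv N K x (p + (q - 1 - s)) a m) - (\<Sum>s<q. cv N K x (s + p) b l * rv N K x (q - 1 - s) a m))
       + ?M q l m * ((if b = c then rv N K x p a l else 0) + (\<Sum>s<p. rv N K x s a l * ?S (p - 1 - s) c b))))"
    using as by (simp add: br_sS_right A1 A2 A3 del: mult_minus_right mult_minus_left)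
  also have "\<dots> = - (if a = d then (\<Sum>l<N. \<Sum>m<N. pb x c l * ?M q l m * cv N K x p b m) else 0)
     - (\<Sum>s<p. ?S s a d * (\<Sum>l<N. \<Sum>m<N. pb x c l * ?M q l m * cv N K x (p - 1 - s) b m))
     + ((\<Sum>s<q. (\<Sum>l<N. \<Sum>m<N. (pb x c l * cv N K x s b l) * (rv N K x (p + (q - 1 - s)) a m * ps x m d)))
       - (\<Sum>s<q. (\<Sum>l<N. \<Sum>m<N. (pb x c l * cv N K x (s + p) b l) * (rv N K x (q - 1 - s) a m * ps x m d))))
     + (if b = c then (\<Sum>l<N. \<Sum>m<N. rv N K x p a l * ?M q l m * ps x m d) else 0)
     + (\<Sum>s<p. ?S (p - 1 - s) c b * (\<Sum>l<N. \<Sum>m<N. rv N K x s a l * ?M q l m * ps x m d))"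
  proof -
    have e1: "(\<Sum>l<N. \<Sum>m<N. pb x c l * ?M q l m * (- (if a = d then cv N K x p b m else 0) - (\<Sum>s<p. ?S s a d * cv N K x (p - 1 - s) b m)))
      = - (if a = d then (\<Sum>l<N. \<Sum>m<N. pb x c l * ?M q l m * cv N K x p b m) else 0)
        - (\<Sum>s<p. ?S s a d * (\<Sum>l<N. \<Sum>m<N. pb x c l * ?M q l m * cv N K x (p - 1 - s) b m))"
      by (simp add: right_diff_distrib sum_subtractf H1 sum_negf)
    have e2: "(\<Sum>l<N. \<Sum>m<N. ps x m d * (pb x c l * ((\<Sum>s<q. cv N K x s b l * rv N K x (p + (q - 1 - s)) a m) - (\<Sum>s<q. cv N K x (s + p) b l * rv N K x (q - 1 - s) a m))))
      = (\<Sum>s<q. (\<Sum>l<N. \<Sum>m<N. (pb x c l * cv N K x s b l) * (rv N K x (p + (q - 1 - s)) a m * ps x m d)))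
       - (\<Sum>s<q. (\<Sum>l<N. \<Sum>m<N. (pb x c l * cv N K x (s + p) b l) * (rv N K x (q - 1 - s) a m * ps x m d)))"
      by (simp add: right_diff_distrib sum_subtractf sum_distrib_left swap3 algebra_simps)
    have e3: "(\<Sum>l<N. \<Sum>m<N. ps x m d * (?M q l m * ((if b = c then rv N K x p a l else 0) + (\<Sum>s<p. rv N K x s a l * ?S (p - 1 - s) c b))))
      = (if b = c then (\<Sum>l<N. \<Sum>m<N. rv N K x p a l * ?M q l m * ps x m d) else 0)
     + (\<Sum>s<p. ?S (p - 1 - s) c b * (\<Sum>l<N. \<Sum>m<N. rv N K x s a l * ?M q l m * ps x m d))"
    proof -
      have "(\<Sum>l<N. \<Sum>m<N. ps x m d * (?M q l m * ((if b = c then rv N K x p a l else 0) + (\<Sum>s<p. rv N K x s a l * ?S (p - 1 - s) c b))))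
        = (\<Sum>l<N. \<Sum>m<N. (if b = c then rv N K x p a l * ?M q l m * ps x m d else 0))
        + (\<Sum>l<N. \<Sum>m<N. (ps x m d * ?M q l m) * (\<Sum>s<p. ?S (p - 1 - s) c b * rv N K x s a l))"
        by (simp add: distrib_left sum.distrib algebra_simps) (cases "b = c"; simp add: algebra_simps)
      also have "\<dots> = (if b = c then (\<Sum>l<N. \<Sum>m<N. rv N K x p a l * ?M q l m * ps x m d) else 0)
       + (\<Sum>s<p. ?S (p - 1 - s) c b * (\<Sum>l<N. \<Sum>m<N. (ps x m d * ?M q l m) * rv N K x s a l))"
        by (simp only: H1) simp
      finally show ?thesis by (simp add: algebra_simps)
    qed
    show ?thesis by (simp only: split3 e1 e2 e3) (simp add: algebra_simps)
  qed
  also have "\<dots> = (if b = c then ?S (p + q) a d else 0) - (if a = d then ?S (q + p) c b else 0)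
  + (\<Sum>s<p. ?S (s + q) a d * ?S (p - 1 - s) c b) - (\<Sum>s<p. ?S s a d * ?S (q + (p - 1 - s)) c b)
  + (\<Sum>s<q. ?S s c b * ?S (p + (q - 1 - s)) a d) - (\<Sum>s<q. ?S (s + p) c b * ?S (q - 1 - s) a d)"
  proof -
    have c1: "(\<Sum>l<N. \<Sum>m<N. pb x c l * ?M q l m * cv N K x r b m) = ?S (q + r) c b" for r
      by (simp add: mult.assoc sum_distrib_left[symmetric] L4 L1)
    have c2: "(\<Sum>l<N. \<Sum>m<N. (pb x c l * cv N K x s b l) * (rv N K x r a m * ps x m d)) = ?S s c b * ?S r a d" for s r
      by (simp add: sum_product[symmetric] L1 L2)
    have c3: "(\<Sum>l<N. \<Sum>m<N. rv N K x r a l * ?M q l m * ps x m d) = ?S (r + q) a d" for r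
    proof -
      have "(\<Sum>l<N. \<Sum>m<N. rv N K x r a l * ?M q l m * ps x m d) = (\<Sum>m<N. \<Sum>l<N. rv N K x r a l * ?M q l m * ps x m d)"
        by (rule sum.swap)
      also have "\<dots> = (\<Sum>m<N. rv N K x (r + q) a m * ps x m d)"
        by (intro sum.cong refl) (simp add: sum_distrib_right[symmetric] L5)
      finally show ?thesis by (simp add: L2)
    qed
    have c3': "(\<Sum>l<N. \<Sum>m<N. ps x m d * ?M q l m * rv N K x r a l) = ?S (r + q) a d" for r
      using c3[of r] by (simp add: algebra_simps)
    show ?thesis by (simp only: c1 c2 c3 c3') (simp add: algebra_simps)
  qed
  finally show ?thesis .
qed

lemma antisym_sum:
  fixes A :: "nat \<Rightarrow> complex"
  assumes "\<And>k. k < p + q \<Longrightarrow> A (p + q - 1 - k) = - A k"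
  shows "(\<Sum>k<p. A k) + (\<Sum>k<q. A k) = 2 * (\<Sum>k<min p q. A k)"
proof -
  have main: "(\<Sum>k<p. A k) + (\<Sum>k<q. A k) = 2 * (\<Sum>k<p. A k)" if pq: "p \<le> q"
    and as: "\<And>k. k < p + q \<Longrightarrow> A (p + q - 1 - k) = - A k" for p q
  proof -
    have sp: "(\<Sum>k<q. A k) = (\<Sum>k<p. A k) + (\<Sum>k\<in>{p..<q}. A k)"
      using sum.atLeastLessThan_concat[of 0 p q A] pq by (simp add: atLeast0LessThan)
    have "(\<Sum>k\<in>{p..<q}. A k) = (\<Sum>k\<in>{p..<q}. A (q + p - Suc k))"
      by (rule sum.atLeastLessThan_rev)
    also have "\<dots> = (\<Sum>k\<in>{p..<q}. - A k)"
    proof (intro sum.cong refl)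
      fix k assume "k \<in> {p..<q}"
      then have "k < p + q" "q + p - Suc k = p + q - 1 - k" by auto
      then show "A (q + p - Suc k) = - A k" using as by simp
    qed
    finally have "(\<Sum>k\<in>{p..<q}. A k) = 0" by (simp add: sum_negf)
    then show ?thesis using sp by simp
  qed
  show ?thesis
  proof (cases "p \<le> q")
    case True then show ?thesis using main[of p q] assms by (simp add: min_def)
  next
    case False
    have "(\<Sum>k<q. A k) + (\<Sum>k<p. A k) = 2 * (\<Sum>k<q. A k)"
      by (rule main) (use False assms in \<open>auto simp: add.commute\<close>)
    then show ?thesis using False by (simp add: min_def add.commute)
  qed
qed

lemma int_interval_sum: "(\<Sum>i\<in>{-1..int m - 1}. F i) = F (-1) + (\<Sum>k<m. F (int k))"
proof -
  have e: "{-1..int m - 1} = insert (-1) (int ` {..<m})"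
  proof (rule set_eqI, rule iffI)
    fix i assume "i \<in> {-1..int m - 1}"
    then show "i \<in> insert (-1) (int ` {..<m})"
      by (cases "i = -1") (auto simp: image_iff intro!: bexI[of _ "nat i"])
  qed auto
  have "(\<Sum>i\<in>insert (-1) (int ` {..<m}). F i) = F (-1) + (\<Sum>i\<in>int ` {..<m}. F i)"
    by (rule sum.insert) auto
  also have "(\<Sum>i\<in>int ` {..<m}. F i) = (\<Sum>k<m. F (int k))"
    by (rule sum.reindex_cong[of int]) auto
  finally show ?thesis using e by simp
qed

lemma tfun_sS: "tfun N K k a b = (\<lambda>x. (1 / 2 ^ k) * sS N K k a b x)"
  by (simp add: tfun_def sS_def)

lemma claim1: "a < K \<Longrightarrow> b < K \<Longrightarrow> c < K \<Longrightarrow> d < K \<Longrightarrow>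
  pbr N K (tfun N K p a b) (tfun N K q c d) =
            (\<lambda>x. \<Sum>i\<in>{-1 .. int (min p q) - 1}.
                 tfun' N K (int (p + q) - 1 - i) a d x * tfun' N K i c b x
               - tfun' N K i a d x * tfun' N K (int (p + q) - 1 - i) c b x)"
proof (rule ext)
  fix x
  assume as: "a < K" "b < K" "c < K" "d < K"
  let ?S = "\<lambda>n a d. sS N K n a d x"
  define A where "A k = ?S (p + q - 1 - k) a d * ?S k c b - ?S k a d * ?S (p + q - 1 - k) c b" for k
  have Aanti: "A (p + q - 1 - k) = - A k" if "k < p + q" for k
    using that by (simp add: A_def algebra_simps)
  have lhs: "pbr N K (tfun N K p a b) (tfun N K q c d) x = (1 / 2 ^ p) * ((1 / 2 ^ q) * pbr N K (sS N K p a b) (sS N K q c d) x)"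
    unfolding tfun_sS
    apply (subst pbr_cmult_left)
     apply (rule sS_pf, rule as, rule as)
    apply (subst pbr_cmult_right)
     apply (rule sS_pf, rule as, rule as)
    apply (rule refl)
    done
  have r1: "(\<Sum>s<p. ?S (s + q) a d * ?S (p - 1 - s) c b) - (\<Sum>s<p. ?S s a d * ?S (q + (p - 1 - s)) c b) = (\<Sum>k<p. A k)"
  proof -
    have ar: "p + q - 1 - (p - Suc s) = s + q" if "s < p" for s using that by arith
    have "(\<Sum>s<p. ?S (s + q) a d * ?S (p - 1 - s) c b) = (\<Sum>s<p. (\<lambda>k. ?S (p + q - 1 - k) a d * ?S k c b) (p - Suc s))"
      by (intro sum.cong refl) (simp add: ar add.commute)
    also have "\<dots> = (\<Sum>k<p. ?S (p + q - 1 - k) a d * ?S k c b)"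
      by (rule sum.nat_diff_reindex)
    finally have "(\<Sum>s<p. ?S (s + q) a d * ?S (p - 1 - s) c b) = (\<Sum>k<p. ?S (p + q - 1 - k) a d * ?S k c b)" .
    moreover have "(\<Sum>s<p. ?S s a d * ?S (q + (p - 1 - s)) c b) = (\<Sum>k<p. ?S k a d * ?S (p + q - 1 - k) c b)"
    proof (intro sum.cong refl)
      fix s assume "s \<in> {..<p}"
      then have "q + (p - 1 - s) = p + q - 1 - s" by auto
      then show "?S s a d * ?S (q + (p - 1 - s)) c b = ?S s a d * ?S (p + q - 1 - s) c b" by simp
    qed
    ultimately show ?thesis by (simp add: A_def sum_subtractf)
  qed
  have r2: "(\<Sum>s<q. ?S s c b * ?S (p + (q - 1 - s)) a d) - (\<Sum>s<q. ?S (s + p) c b * ?S (q - 1 - s) a d) = (\<Sum>k<q. A k)"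
  proof -
    have ar: "p + q - 1 - (q - Suc s) = s + p" if "s < q" for s using that by arith
    have "(\<Sum>s<q. ?S (s + p) c b * ?S (q - 1 - s) a d) = (\<Sum>s<q. (\<lambda>k. ?S (p + q - 1 - k) c b * ?S k a d) (q - Suc s))"
      by (intro sum.cong refl) (simp add: ar add.commute)
    also have "\<dots> = (\<Sum>k<q. ?S (p + q - 1 - k) c b * ?S k a d)"
      by (rule sum.nat_diff_reindex)
    finally have "(\<Sum>s<q. ?S (s + p) c b * ?S (q - 1 - s) a d) = (\<Sum>k<q. ?S (p + q - 1 - k) c b * ?S k a d)" .
    moreover have "(\<Sum>s<q. ?S s c b * ?S (p + (q - 1 - s)) a d) = (\<Sum>k<q. ?S (p + q - 1 - k) a d * ?S k c b)"
      by (intro sum.cong refl) (auto simp: mult.commute)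
    ultimately show ?thesis by (simp add: A_def sum_subtractf mult.commute)
  qed
  have pw: "(1 / 2 ^ (p + q - 1 - k)) * (1 / 2 ^ k) = 2 * ((1 / 2 ^ p) * (1 / 2 ^ q) :: complex)" if "k < min p q" for k
  proof -
    have "(2::complex) ^ p * 2 ^ q = 2 * (2 ^ (p + q - 1 - k) * 2 ^ k)"
      using that by (simp add: power_add[symmetric] power_Suc[symmetric])
    then show ?thesis by (simp add: field_simps)
  qed
  have rhs: "(\<Sum>i\<in>{-1 .. int (min p q) - 1}.
                 tfun' N K (int (p + q) - 1 - i) a d x * tfun' N K i c b x
               - tfun' N K i a d x * tfun' N K (int (p + q) - 1 - i) c b x)
     = (1 / 2 ^ (p + q)) * ((if c = b then ?S (p + q) a d else 0) - (if a = d then ?S (p + q) c b else 0))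
       + (\<Sum>k<min p q. (1 / 2 ^ (p + q - 1 - k)) * (1 / 2 ^ k) * A k)"
  proof -
    have t1: "tfun' N K (int (p + q) - 1 - (-1)) a' d' x = (1 / 2 ^ (p + q)) * ?S (p + q) a' d'" for a' d'
    proof -
      have "int (p + q) - 1 - (-1) = int (p + q)" by simp
      then show ?thesis by (simp only: tfun'_def tfun_sS) (simp del: of_nat_add add: of_nat_add[symmetric])
    qed
    have t2: "tfun' N K (-1) a' d' x = (if a' = d' then 1 else 0)" for a' d'
      by (simp add: tfun'_def)
    have t3: "tfun' N K (int (p + q) - 1 - int k) a' d' x = (1 / 2 ^ (p + q - 1 - k)) * ?S (p + q - 1 - k) a' d'"
      if "k < min p q" for k a' d'
    proof -
      have "int (p + q) - 1 - int k \<noteq> -1" "nat (int (p + q) - 1 - int k) = p + q - 1 - k" using that by auto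
      then show ?thesis by (simp add: tfun'_def tfun_sS)
    qed
    have t4: "tfun' N K (int k) a' d' x = (1 / 2 ^ k) * ?S k a' d'" for k a' d'
      by (simp add: tfun'_def tfun_sS)
    have s1: "(\<Sum>k<min p q. tfun' N K (int (p + q) - 1 - int k) a d x * tfun' N K (int k) c b x
               - tfun' N K (int k) a d x * tfun' N K (int (p + q) - 1 - int k) c b x)
       = (\<Sum>k<min p q. (1 / 2 ^ (p + q - 1 - k)) * (1 / 2 ^ k) * A k)"
    proof (rule sum.cong[OF refl])
      fix k assume "k \<in> {..<min p q}"
      then have kk: "k < min p q" by simp
      show "tfun' N K (int (p + q) - 1 - int k) a d x * tfun' N K (int k) c b x
               - tfun' N K (int k) a d x * tfun' N K (int (p + q) - 1 - int k) c b x
           = (1 / 2 ^ (p + q - 1 - k)) * (1 / 2 ^ k) * A k"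
        by (simp only: t3[OF kk] t4 A_def) (simp add: algebra_simps)
    qed
    have s0: "tfun' N K (int (p + q) - 1 - (-1)) a d x * tfun' N K (-1) c b x
               - tfun' N K (-1) a d x * tfun' N K (int (p + q) - 1 - (-1)) c b x
        = (1 / 2 ^ (p + q)) * ((if c = b then ?S (p + q) a d else 0) - (if a = d then ?S (p + q) c b else 0))"
      by (simp only: t1 t2) (simp add: algebra_simps)
    show ?thesis unfolding int_interval_sum s1 s0 ..
  qed
  show "pbr N K (tfun N K p a b) (tfun N K q c d) x = (\<Sum>i\<in>{-1 .. int (min p q) - 1}.
                 tfun' N K (int (p + q) - 1 - i) a d x * tfun' N K i c b x
               - tfun' N K i a d x * tfun' N K (int (p + q) - 1 - i) c b x)"
  proof -
    have as2: "(\<Sum>k<p. A k) + (\<Sum>k<q. A k) = 2 * (\<Sum>k<min p q. A k)"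
      by (rule antisym_sum) (rule Aanti)
    have bs: "pbr N K (sS N K p a b) (sS N K q c d) x = (if b = c then ?S (p + q) a d else 0) - (if a = d then ?S (p + q) c b else 0)
        + ((\<Sum>k<p. A k) + (\<Sum>k<q. A k))"
      unfolding B_step[OF as] using r1 r2 by (simp add: algebra_simps)
    have sm: "(\<Sum>k<min p q. (1 / 2 ^ (p + q - 1 - k)) * (1 / 2 ^ k) * A k) = 2 * ((1 / 2 ^ p) * (1 / 2 ^ q)) * (\<Sum>k<min p q. A k)"
    proof -
      have "(\<Sum>k<min p q. (1 / 2 ^ (p + q - 1 - k)) * (1 / 2 ^ k) * A k) = (\<Sum>k<min p q. 2 * ((1 / 2 ^ p) * (1 / 2 ^ q)) * A k)"
        by (rule sum.cong[OF refl]) (simp only: pw lessThan_iff)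
      then show ?thesis by (simp only: sum_distrib_left)
    qed
    show ?thesis unfolding lhs rhs bs as2 sm
      by (simp add: power_add algebra_simps eq_commute[of c b])
  qed
qed

definition Cset :: "nat \<Rightarrow> nat \<Rightarrow> crd set" where
  "Cset N K = (\<lambda>(m,n). CB m n) ` ({..<N} \<times> {..<N}) \<union> (\<lambda>(i,a). CS i a) ` ({..<N} \<times> {..<K}) \<union> (\<lambda>(a,i). CP a i) ` ({..<K} \<times> {..<N})"

lemma Cset_finite[simp]: "finite (Cset N K)"
  by (simp add: Cset_def)

lemma in_Cset[simp]: "CB m n \<in> Cset N K \<longleftrightarrow> m < N \<and> n < N"
  "CS i a \<in> Cset N K \<longleftrightarrow> i < N \<and> a < K"
  "CP a i \<in> Cset N K \<longleftrightarrow> a < K \<and> i < N"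
  by (auto simp: Cset_def)

lemma sum_C: "(\<Sum>u\<in>Cset N K. F u) = (\<Sum>m<N. \<Sum>n<N. F (CB m n)) + (\<Sum>i<N. \<Sum>a<K. F (CS i a)) + (\<Sum>a<K. \<Sum>i<N. F (CP a i))"
proof -
  let ?A = "(\<lambda>(m,n). CB m n) ` ({..<N} \<times> {..<N})"
  let ?B = "(\<lambda>(i,a). CS i a) ` ({..<N} \<times> {..<K})"
  let ?C = "(\<lambda>(a,i). CP a i) ` ({..<K} \<times> {..<N})"
  have "(\<Sum>u\<in>Cset N K. F u) = sum F (?A \<union> ?B) + sum F ?C"
    unfolding Cset_def by (rule sum.union_disjoint) auto
  also have "sum F (?A \<union> ?B) = sum F ?A + sum F ?B"
    by (rule sum.union_disjoint) auto
  also have "sum F ?A = (\<Sum>m<N. \<Sum>n<N. F (CB m n))"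
    by (subst sum.reindex) (auto simp: inj_on_def sum.cartesian_product prod.case_distrib)
  also have "sum F ?B = (\<Sum>i<N. \<Sum>a<K. F (CS i a))"
    by (subst sum.reindex) (auto simp: inj_on_def sum.cartesian_product prod.case_distrib)
  also have "sum F ?C = (\<Sum>a<K. \<Sum>i<N. F (CP a i))"
    by (subst sum.reindex) (auto simp: inj_on_def sum.cartesian_product prod.case_distrib)
  finally show ?thesis .
qed

lemma sum_C_delta: "v \<in> Cset N K \<Longrightarrow> (\<Sum>u\<in>Cset N K. (if u = v then 1 else 0) * F u) = (F v :: complex)"
  by (simp add: if01 sum.delta[OF Cset_finite] cong: if_cong)

lemma chain_rule:
  assumes "f \<in> poly_fun N K"
    and d: "\<And>u. u \<in> Cset N K \<Longrightarrow> ((\<lambda>t. get (\<gamma> t) u) has_field_derivative \<gamma>' u) (at t0)"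
  shows "((\<lambda>t. f (\<gamma> t)) has_field_derivative (\<Sum>u\<in>Cset N K. dd f (\<gamma> t0) u * \<gamma>' u)) (at t0)"
  using assms(1)
proof (induction f rule: poly_fun.induct)
  case (pf_const c) then show ?case by simp
next
  case (pf_B i j)
  have "(\<Sum>u\<in>Cset N K. dd (\<lambda>x. Bm x i j) (\<gamma> t0) u * \<gamma>' u) = \<gamma>' (CB i j)"
    using pf_B by (simp add: dd_Bm sum_C_delta)
  then show ?case using d[of "CB i j"] pf_B by simp
next
  case (pf_psi i a)
  have "(\<Sum>u\<in>Cset N K. dd (\<lambda>x. ps x i a) (\<gamma> t0) u * \<gamma>' u) = \<gamma>' (CS i a)"
    using pf_psi by (simp add: dd_ps sum_C_delta)
  then show ?case using d[of "CS i a"] pf_psi by simp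
next
  case (pf_psib a i)
  have "(\<Sum>u\<in>Cset N K. dd (\<lambda>x. pb x a i) (\<gamma> t0) u * \<gamma>' u) = \<gamma>' (CP a i)"
    using pf_psib by (simp add: dd_pb sum_C_delta)
  then show ?case using d[of "CP a i"] pf_psib by simp
next
  case (pf_add f g)
  have "(\<Sum>u\<in>Cset N K. dd (\<lambda>x. f x + g x) (\<gamma> t0) u * \<gamma>' u)
      = (\<Sum>u\<in>Cset N K. dd f (\<gamma> t0) u * \<gamma>' u) + (\<Sum>u\<in>Cset N K. dd g (\<gamma> t0) u * \<gamma>' u)"
    using pf_add by (simp add: dd_add[where N=N and K=K] sum.distrib ring_distribs)
  then show ?case using DERIV_add[OF pf_add.IH] by simp
next
  case (pf_mult f g)
  have "(\<Sum>u\<in>Cset N K. dd (\<lambda>x. f x * g x) (\<gamma> t0) u * \<gamma>' u)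
      = (\<Sum>u\<in>Cset N K. dd f (\<gamma> t0) u * \<gamma>' u) * g (\<gamma> t0) + (\<Sum>u\<in>Cset N K. dd g (\<gamma> t0) u * \<gamma>' u) * f (\<gamma> t0)"
    using pf_mult by (simp add: dd_mult[where N=N and K=K] sum.distrib sum_distrib_right sum_distrib_left ring_distribs algebra_simps)
  then show ?case using DERIV_mult[OF pf_mult.IH] by simp
qed

lemma pf_local: "f \<in> poly_fun N K \<Longrightarrow> (\<And>u. u \<in> Cset N K \<Longrightarrow> get x u = get y u) \<Longrightarrow> f x = f y"
proof (induction f rule: poly_fun.induct)
  case (pf_B i j) then show ?case using pf_B.prems[of "CB i j"] by simp
next
  case (pf_psi i a) then show ?case using pf_psi.prems[of "CS i a"] by simp
next
  case (pf_psib a i) then show ?case using pf_psib.prems[of "CP a i"] by simp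
qed simp_all

lemma dd_local: "f \<in> poly_fun N K \<Longrightarrow> (\<And>u. u \<in> Cset N K \<Longrightarrow> get x u = get y u) \<Longrightarrow> v \<in> Cset N K \<Longrightarrow> dd f x v = dd f y v"
proof -
  assume f: "f \<in> poly_fun N K" and e: "\<And>u. u \<in> Cset N K \<Longrightarrow> get x u = get y u" and v: "v \<in> Cset N K"
  have "(\<lambda>s. f (upd x v s)) = (\<lambda>s. f (upd y v s))"
    by (rule ext, rule pf_local[OF f]) (simp add: get_upd e)
  then show ?thesis by (simp add: dd_def e[OF v])
qed

lemma lmul_delta: "m < (N::nat) \<Longrightarrow> l < N \<Longrightarrow>
  (\<Sum>r<N. ((if m = r then 1 else 0) + (if m = k \<and> r = l then t else 0)) * X r) = X m + (if m = k then t * X l else (0::complex))"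
proof -
  assume a: "m < N" "l < N"
  have "(\<Sum>r<N. ((if m = r then 1 else 0) + (if m = k \<and> r = l then t else 0)) * X r)
      = (\<Sum>r<N. (if m = r then X r else 0)) + (\<Sum>r<N. if r = l then (if m = k then t else 0) * X r else 0)"
    by (simp only: distrib_right sum.distrib) (intro arg_cong2[where f="(+)"] sum.cong refl; auto)
  also have "\<dots> = X m + (if m = k then t else 0) * X l" using a by simp
  finally show ?thesis by simp
qed

lemma rmul_delta: "n < (N::nat) \<Longrightarrow> k < N \<Longrightarrow>
  (\<Sum>j<N. Y j * ((if j = n then 1 else 0) + (if j = k \<and> n = l then c else 0))) = Y n + (if n = l then c * Y k else (0::complex))"
proof -
  assume a: "n < N" "k < N"
  have "(\<Sum>j<N. Y j * ((if j = n then 1 else 0) + (if j = k \<and> n = l then c else 0)))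
      = (\<Sum>j<N. (if j = n then Y j else 0)) + (\<Sum>j<N. if j = k then (if n = l then c else 0) * Y j else 0)"
    by (simp only: distrib_left sum.distrib) (intro arg_cong2[where f="(+)"] sum.cong refl; auto)
  also have "\<dots> = Y n + (if n = l then c else 0) * Y k" using a by simp
  finally show ?thesis by simp
qed

lemma inf_inv:
  assumes f: "f \<in> inv_alg N K" and kl: "k < N" "l < N"
  shows "(\<Sum>n<N. dd f x (CB k n) * Bm x l n) - (\<Sum>m<N. dd f x (CB m l) * Bm x m k)
       + (\<Sum>a<K. dd f x (CS k a) * ps x l a) - (\<Sum>a<K. dd f x (CP a l) * pb x a k) = 0"
proof -
  have fp: "f \<in> poly_fun N K" using f by (simp add: inv_alg_def)
  define e where "e = (if k = l then 1 else (0::complex))"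
  define c where "c t = - t / (1 + t * e)" for t :: complex
  define g where "g t = (\<lambda>i j. (if i = j then 1 else 0) + (if i = k \<and> j = l then t else (0::complex)))" for t
  define h where "h t = (\<lambda>i j. (if i = j then 1 else 0) + (if i = k \<and> j = l then c t else (0::complex)))" for t
  define \<gamma> where "\<gamma> t = gl_act N (g t) (h t) x" for t
  have c0: "c 0 = 0" by (simp add: c_def)
  have cd: "(c has_field_derivative -1) (at 0)"
    unfolding c_def by (auto intro!: derivative_eq_intros)
  have ce: "c t + t + t * c t * e = 0" if "1 + t * e \<noteq> 0" for t
    using that by (simp add: c_def field_simps)
  have gB: "get (\<gamma> t) (CB m n) = Bm x m n + t * (if m = k then Bm x l n else 0) + c t * (if n = l then Bm x m k else 0)
            + t * c t * (if m = k \<and> n = l then Bm x l k else 0)" if "m < N" "n < N" for t m n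
  proof -
    have "get (\<gamma> t) (CB m n) = (\<Sum>j<N. (\<Sum>r<N. g t m r * Bm x r j) * h t j n)"
      by (simp add: \<gamma>_def gl_act_def mmul_def)
    also have "\<dots> = (\<Sum>j<N. (Bm x m j + (if m = k then t * Bm x l j else 0)) * h t j n)"
      by (intro sum.cong refl) (simp add: g_def lmul_delta that kl)
    also have "\<dots> = (Bm x m n + (if m = k then t * Bm x l n else 0)) + (if n = l then c t * (Bm x m k + (if m = k then t * Bm x l k else 0)) else 0)"
      unfolding h_def by (rule rmul_delta[OF that(2) kl(1)])
    finally show ?thesis by (auto simp: algebra_simps)
  qed
  have gS: "get (\<gamma> t) (CS i a) = ps x i a + t * (if i = k then ps x l a else 0)" if "i < N" for t i a
  proof -
    have "get (\<gamma> t) (CS i a) = (\<Sum>r<N. g t i r * ps x r a)"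
      by (simp add: \<gamma>_def gl_act_def mmul_def)
    also have "\<dots> = ps x i a + (if i = k then t * ps x l a else 0)"
      unfolding g_def by (rule lmul_delta[OF that kl(2)])
    finally show ?thesis by simp
  qed
  have gP: "get (\<gamma> t) (CP a i) = pb x a i + c t * (if i = l then pb x a k else 0)" if "i < N" for t i a
  proof -
    have "get (\<gamma> t) (CP a i) = (\<Sum>r<N. pb x a r * h t r i)"
      by (simp add: \<gamma>_def gl_act_def mmul_def)
    also have "\<dots> = pb x a i + (if i = l then c t * pb x a k else 0)"
      unfolding h_def by (rule rmul_delta[OF that kl(1)])
    finally show ?thesis by simp
  qed
  define \<gamma>' where "\<gamma>' u = (case u of CB m n \<Rightarrow> (if m = k then Bm x l n else 0) - (if n = l then Bm x m k else 0)
      | CS i a \<Rightarrow> (if i = k then ps x l a else 0) | CP a i \<Rightarrow> - (if i = l then pb x a k else 0))" for u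
  have dg: "((\<lambda>t. get (\<gamma> t) u) has_field_derivative \<gamma>' u) (at 0)" if "u \<in> Cset N K" for u
  proof (cases u)
    case (CB m n)
    then have mn: "m < N" "n < N" using that by auto
    have "((\<lambda>t. Bm x m n + t * (if m = k then Bm x l n else 0) + c t * (if n = l then Bm x m k else 0)
            + t * c t * (if m = k \<and> n = l then Bm x l k else 0)) has_field_derivative \<gamma>' u) (at 0)"
      unfolding CB \<gamma>'_def by (auto intro!: derivative_eq_intros cd simp: c0)
    then show ?thesis by (simp del: get.simps add: CB gB[OF mn])
  next
    case (CS i a)
    then have i: "i < N" using that by auto
    have "((\<lambda>t. ps x i a + t * (if i = k then ps x l a else 0)) has_field_derivative \<gamma>' u) (at 0)"
      unfolding CS \<gamma>'_def by (auto intro!: derivative_eq_intros)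
    then show ?thesis by (simp del: get.simps add: CS gS[OF i])
  next
    case (CP a i)
    then have i: "i < N" using that by auto
    have "((\<lambda>t. pb x a i + c t * (if i = l then pb x a k else 0)) has_field_derivative \<gamma>' u) (at 0)"
      unfolding CP \<gamma>'_def by (auto intro!: derivative_eq_intros cd)
    then show ?thesis by (simp del: get.simps add: CP gP[OF i])
  qed
  have D1: "((\<lambda>t. f (\<gamma> t)) has_field_derivative (\<Sum>u\<in>Cset N K. dd f (\<gamma> 0) u * \<gamma>' u)) (at 0)"
    by (rule chain_rule[OF fp dg])
  have inv: "f (\<gamma> t) = f x" if "t \<in> ball 0 (1/2)" for t
  proof -
    have "norm (t * e) < 1/2" using that by (auto simp: e_def norm_mult)
    then have ne: "1 + t * e \<noteq> 0"
      by (metis add.inverse_unique norm_minus_cancel norm_one order_less_irrefl less_trans one_less_numeral_iff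
          semiring_norm(76) divide_less_eq_1_pos zero_less_numeral)
    have ip: "is_inv_pair N (g t) (h t)"
      unfolding is_inv_pair_def
    proof (intro allI impI conjI)
      fix i j assume ij: "i < N" "j < N"
      have "mmul N (g t) (h t) i j = h t i j + (if i = k then t * h t l j else 0)"
        unfolding mmul_def g_def by (rule lmul_delta[OF ij(1) kl(2)])
      also have "\<dots> = (if i = j then 1 else 0) + (if i = k \<and> j = l then c t + t + t * c t * e else 0)"
        by (auto simp: h_def e_def algebra_simps)
      finally show "mmul N (g t) (h t) i j = (if i = j then 1 else 0)" using ce[OF ne] by simp
      have "mmul N (h t) (g t) i j = g t i j + (if i = k then c t * g t l j else 0)"
        unfolding mmul_def h_def by (rule lmul_delta[OF ij(1) kl(2)])
      also have "\<dots> = (if i = j then 1 else 0) + (if i = k \<and> j = l then c t + t + t * c t * e else 0)"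
        by (auto simp: g_def e_def algebra_simps)
      finally show "mmul N (h t) (g t) i j = (if i = j then 1 else 0)" using ce[OF ne] by simp
    qed
    then show ?thesis using f by (simp add: inv_alg_def \<gamma>_def)
  qed
  have D2: "((\<lambda>t. f (\<gamma> t)) has_field_derivative 0) (at 0)"
    by (rule has_field_derivative_transform_within_open[of "\<lambda>t. f x" 0 0 "ball 0 (1/2)"])
       (auto simp: inv)
  have z: "(\<Sum>u\<in>Cset N K. dd f (\<gamma> 0) u * \<gamma>' u) = 0"
    using DERIV_unique[OF D1 D2] .
  have loc: "get (\<gamma> 0) u = get x u" if "u \<in> Cset N K" for u
    using that by (cases u) (simp_all only: gB gS gP in_Cset, simp_all add: c0)
  have "(\<Sum>u\<in>Cset N K. dd f x u * \<gamma>' u) = 0"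
    using z dd_local[OF fp loc] by (simp cong: sum.cong)
  then show ?thesis
    by (simp add: sum_C \<gamma>'_def right_diff_distrib sum_subtractf sum.distrib if_distrib[of "\<lambda>z. _ * z"] kl cong: if_cong)
       (simp add: algebra_simps sum_negf kl)
qed

lemma inv_pf: "f \<in> inv_alg N K \<Longrightarrow> f \<in> poly_fun N K"
  by (simp add: inv_alg_def)

lemma br_f_Bt: assumes f: "f \<in> inv_alg N K" and mn: "m < N" "n < N"
  shows "pbr N K f (\<lambda>x. Bt K x m n) x = (\<Sum>r<N. dd f x (CB r m) * Bt K x r n) - (\<Sum>s<N. dd f x (CB n s) * Bt K x m s)"
proof -
  have fp: "f \<in> poly_fun N K" using f by (rule inv_pf)
  let ?P = "\<lambda>r n. \<Sum>a<K. pb x a n * ps x r a"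
  have "pbr N K f (\<lambda>x. Bt K x m n) x = pbr N K f (\<lambda>x. Bm x m n) x + pbr N K f (\<lambda>x. \<Sum>b<K. ps x m b * pb x b n) x"
    unfolding Bt_fun by (rule pbr_add_right) (use mn in \<open>auto intro!: poly_fun.intros pf_sum\<close>)
  also have "pbr N K f (\<lambda>x. \<Sum>b<K. ps x m b * pb x b n) x = (\<Sum>b<K. pbr N K f (\<lambda>x. ps x m b * pb x b n) x)"
    by (rule pbr_sum_right) (use mn in \<open>auto intro!: poly_fun.intros\<close>)
  also have "\<dots> = (\<Sum>b<K. ps x m b * dd f x (CS n b) - pb x b n * dd f x (CP b m))"
    by (intro sum.cong refl, subst pbr_mult_right) (use mn in \<open>auto intro!: poly_fun.intros simp: pbr_ps_right pbr_pb_right\<close>)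
  also have "pbr N K f (\<lambda>x. Bm x m n) x = (\<Sum>r<N. dd f x (CB r m) * ?P r n) - (\<Sum>s<N. dd f x (CB n s) * ?P m s)"
  proof -
    have "pbr N K f (\<lambda>x. Bm x m n) x = (\<Sum>r<N. \<Sum>s<N. (if s = m then dd f x (CB r s) * ?P r n else 0))
        - (\<Sum>r<N. \<Sum>s<N. (if r = n then dd f x (CB r s) * ?P m s else 0))"
      using mn by (simp add: pbr_Bm_right Bbr_def right_diff_distrib sum_subtractf if_distrib[of "\<lambda>z. _ * z"] cong: if_cong)
    then show ?thesis using mn by simp
  qed
  finally have e: "pbr N K f (\<lambda>x. Bt K x m n) x = (\<Sum>r<N. dd f x (CB r m) * ?P r n) - (\<Sum>s<N. dd f x (CB n s) * ?P m s)
     + (\<Sum>b<K. ps x m b * dd f x (CS n b) - pb x b n * dd f x (CP b m))" .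
  have i: "(\<Sum>s<N. dd f x (CB n s) * Bm x m s) - (\<Sum>r<N. dd f x (CB r m) * Bm x r n)
       + (\<Sum>a<K. dd f x (CS n a) * ps x m a) - (\<Sum>a<K. dd f x (CP a m) * pb x a n) = 0"
    by (rule inf_inv[OF f mn(2) mn(1)])
  have bt: "Bt K x r q = Bm x r q + ?P r q" for r q
    by (simp add: Bt_def mult.commute)
  show ?thesis unfolding e bt using i
    by (simp add: distrib_left sum.distrib sum_subtractf algebra_simps)
qed

lemma br_mp_f: assumes f: "f \<in> inv_alg N K" and ij: "i < N" "j < N"
  shows "pbr N K (mp N K k i j) f x = (\<Sum>s<N. mpow N (Bt K x) k i s * dd f x (CB j s)) - (\<Sum>r<N. dd f x (CB r i) * mpow N (Bt K x) k r j)"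
  using ij(2)
proof (induction k arbitrary: j)
  case 0 then show ?case using ij(1) by (simp add: mp_0 if01 cong: if_cong)
next
  case (Suc k)
  let ?M = "mpow N (Bt K x)"
  let ?F = "\<lambda>r s. dd f x (CB r s)"
  have "pbr N K (mp N K (Suc k) i j) f x = (\<Sum>r<N. pbr N K (\<lambda>x. mp N K k i r x * Bt K x r j) f x)"
    unfolding mp_Suc by (rule pbr_sum_left) (use Suc.prems in \<open>auto intro!: poly_fun.intros mp_pf Bt_pf\<close>)
  also have "\<dots> = (\<Sum>r<N. ?M k i r * ((\<Sum>s<N. ?F j s * Bt K x r s) - (\<Sum>t<N. ?F t r * Bt K x t j))
       + Bt K x r j * ((\<Sum>s<N. ?M k i s * ?F r s) - (\<Sum>t<N. ?F t i * ?M k t r)))"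
  proof (intro sum.cong refl)
    fix r assume r: "r \<in> {..<N}"
    have "pbr N K (\<lambda>x. Bt K x r j) f x = (\<Sum>s<N. ?F j s * Bt K x r s) - (\<Sum>t<N. ?F t r * Bt K x t j)"
      using r Suc.prems by (subst pbr_skew) (simp add: br_f_Bt[OF f])
    then show "pbr N K (\<lambda>x. mp N K k i r x * Bt K x r j) f x = ?M k i r * ((\<Sum>s<N. ?F j s * Bt K x r s) - (\<Sum>t<N. ?F t r * Bt K x t j))
       + Bt K x r j * ((\<Sum>s<N. ?M k i s * ?F r s) - (\<Sum>t<N. ?F t i * ?M k t r))"
    proof -
      have ih: "pbr N K (mp N K k i r) f x = (\<Sum>s<N. ?M k i s * ?F r s) - (\<Sum>t<N. ?F t i * ?M k t r)"
        using Suc.IH r by simp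
      have "pbr N K (\<lambda>x. mp N K k i r x * Bt K x r j) f x = mp N K k i r x * pbr N K (\<lambda>x. Bt K x r j) f x + Bt K x r j * pbr N K (mp N K k i r) f x"
        by (rule pbr_mult_left) (use r Suc.prems in \<open>auto intro!: mp_pf Bt_pf\<close>)
      then show ?thesis by (simp only: ih \<open>pbr N K (\<lambda>x. Bt K x r j) f x = _\<close>) (simp add: mp_def)
    qed
  qed
  also have "\<dots> = (\<Sum>s<N. ?M (Suc k) i s * ?F j s) - (\<Sum>t<N. ?F t i * ?M (Suc k) t j)"
  proof -
    have a1: "(\<Sum>r<N. ?M k i r * (\<Sum>s<N. ?F j s * Bt K x r s)) = (\<Sum>s<N. ?M (Suc k) i s * ?F j s)"
    proof -
      have "(\<Sum>r<N. ?M k i r * (\<Sum>s<N. ?F j s * Bt K x r s)) = (\<Sum>r<N. \<Sum>s<N. ?M k i r * Bt K x r s * ?F j s)"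
        by (simp add: sum_distrib_left algebra_simps)
      also have "\<dots> = (\<Sum>s<N. \<Sum>r<N. ?M k i r * Bt K x r s * ?F j s)" by (rule sum.swap)
      finally show ?thesis by (simp del: mpow.simps add: mpow_Suc' sum_distrib_right)
    qed
    have a2: "(\<Sum>r<N. Bt K x r j * (\<Sum>t<N. ?F t i * ?M k t r)) = (\<Sum>t<N. ?F t i * ?M (Suc k) t j)"
    proof -
      have "(\<Sum>r<N. Bt K x r j * (\<Sum>t<N. ?F t i * ?M k t r)) = (\<Sum>r<N. \<Sum>t<N. ?F t i * (?M k t r * Bt K x r j))"
        by (simp add: sum_distrib_left algebra_simps)
      also have "\<dots> = (\<Sum>t<N. \<Sum>r<N. ?F t i * (?M k t r * Bt K x r j))" by (rule sum.swap)
      finally show ?thesis by (simp del: mpow.simps add: mpow_Suc' sum_distrib_left)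
    qed
    have a3: "(\<Sum>r<N. ?M k i r * (\<Sum>t<N. ?F t r * Bt K x t j)) = (\<Sum>r<N. Bt K x r j * (\<Sum>s<N. ?M k i s * ?F r s))"
    proof -
      have "(\<Sum>r<N. ?M k i r * (\<Sum>t<N. ?F t r * Bt K x t j)) = (\<Sum>r<N. \<Sum>t<N. Bt K x t j * (?M k i r * ?F t r))"
        by (simp add: sum_distrib_left algebra_simps)
      also have "\<dots> = (\<Sum>t<N. \<Sum>r<N. Bt K x t j * (?M k i r * ?F t r))" by (rule sum.swap)
      finally show ?thesis by (simp add: sum_distrib_left)
    qed
    show ?thesis
      by (simp only: right_diff_distrib distrib_left sum.distrib sum_subtractf a1 a2 a3) simp
  qed
  finally show ?case .
qed

lemma claim2: "f \<in> inv_alg N K \<Longrightarrow> pbr N K (trBt N K n) f = (\<lambda>x. 0)"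
proof (rule ext)
  fix x assume f: "f \<in> inv_alg N K"
  have "pbr N K (trBt N K n) f x = (\<Sum>i<N. pbr N K (mp N K n i i) f x)"
  proof -
    have "trBt N K n = (\<lambda>x. \<Sum>i<N. mp N K n i i x)" by (simp add: trBt_def mp_def)
    then show ?thesis by (simp only:) (rule pbr_sum_left, auto intro!: mp_pf)
  qed
  also have "\<dots> = (\<Sum>i<N. \<Sum>s<N. mpow N (Bt K x) n i s * dd f x (CB i s)) - (\<Sum>i<N. \<Sum>r<N. dd f x (CB r i) * mpow N (Bt K x) n r i)"
    by (simp add: br_mp_f[OF f] sum_subtractf)
  also have "\<dots> = 0"
    by (subst sum.swap) (simp add: mult.commute)
  finally show "pbr N K (trBt N K n) f x = 0" .
qed

lemma deriv_repr:
  assumes D0: "\<And>c. D (\<lambda>x. c) x = 0"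
    and Dadd: "\<And>f g. f \<in> poly_fun N K \<Longrightarrow> g \<in> poly_fun N K \<Longrightarrow> D (\<lambda>x. f x + g x) x = D f x + D g x"
    and Dmul: "\<And>f g. f \<in> poly_fun N K \<Longrightarrow> g \<in> poly_fun N K \<Longrightarrow> D (\<lambda>x. f x * g x) x = f x * D g x + g x * D f x"
    and f: "f \<in> poly_fun N K"
  shows "D f x = (\<Sum>u\<in>Cset N K. dd f x u * D (\<lambda>y. get y u) x)"
  using f
proof (induction f rule: poly_fun.induct)
  case (pf_const c) then show ?case by (simp add: D0)
next
  case (pf_B i j) then show ?case by (simp add: dd_Bm sum_C_delta)
next
  case (pf_psi i a) then show ?case by (simp add: dd_ps sum_C_delta)
next
  case (pf_psib a i) then show ?case by (simp add: dd_pb sum_C_delta)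
next
  case (pf_add f g) then show ?case
    by (simp add: Dadd dd_add[where N=N and K=K] sum.distrib ring_distribs)
next
  case (pf_mult f g) then show ?case
    by (simp add: Dmul dd_mult[where N=N and K=K] sum.distrib ring_distribs sum_distrib_left algebra_simps)
qed

definition jac :: "nat \<Rightarrow> nat \<Rightarrow> (rep \<Rightarrow> complex) \<Rightarrow> (rep \<Rightarrow> complex) \<Rightarrow> (rep \<Rightarrow> complex) \<Rightarrow> rep \<Rightarrow> complex" where
  "jac N K f g h x = pbr N K f (pbr N K g h) x + pbr N K g (pbr N K h f) x + pbr N K h (pbr N K f g) x"

lemma jac_cyc: "jac N K f g h x = jac N K g h f x"
  by (simp add: jac_def algebra_simps)

lemma pbr_const_fun: "pbr N K h (\<lambda>x. c) = (\<lambda>x. 0)" "pbr N K (\<lambda>x. c) h = (\<lambda>x. 0)"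
  by (rule ext, simp)+

lemma pbr_add_right_fun: "f \<in> poly_fun N K \<Longrightarrow> g \<in> poly_fun N K \<Longrightarrow>
   pbr N K h (\<lambda>x. f x + g x) = (\<lambda>x. pbr N K h f x + pbr N K h g x)"
  by (rule ext) (simp add: pbr_add_right)
lemma pbr_add_left_fun: "f \<in> poly_fun N K \<Longrightarrow> g \<in> poly_fun N K \<Longrightarrow>
   pbr N K (\<lambda>x. f x + g x) h = (\<lambda>x. pbr N K f h x + pbr N K g h x)"
  by (rule ext) (simp add: pbr_add_left)
lemma pbr_mult_right_fun: "f \<in> poly_fun N K \<Longrightarrow> g \<in> poly_fun N K \<Longrightarrow>
   pbr N K h (\<lambda>x. f x * g x) = (\<lambda>x. f x * pbr N K h g x + g x * pbr N K h f x)"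
  by (rule ext) (simp add: pbr_mult_right)
lemma pbr_mult_left_fun: "f \<in> poly_fun N K \<Longrightarrow> g \<in> poly_fun N K \<Longrightarrow>
   pbr N K (\<lambda>x. f x * g x) h = (\<lambda>x. f x * pbr N K g h x + g x * pbr N K f h x)"
  by (rule ext) (simp add: pbr_mult_left)

lemma jac_const: "jac N K (\<lambda>x. c) g h x = 0"
  by (simp add: jac_def pbr_const_fun)

lemma jac_add: assumes "f1 \<in> poly_fun N K" "f2 \<in> poly_fun N K" "g \<in> poly_fun N K" "h \<in> poly_fun N K"
  shows "jac N K (\<lambda>x. f1 x + f2 x) g h x = jac N K f1 g h x + jac N K f2 g h x"
  using assms
  by (simp add: jac_def pbr_add_right_fun pbr_add_left_fun pbr_add_left pbr_add_right pbr_pf)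

lemma jac_mult: assumes "f1 \<in> poly_fun N K" "f2 \<in> poly_fun N K" "g \<in> poly_fun N K" "h \<in> poly_fun N K"
  shows "jac N K (\<lambda>x. f1 x * f2 x) g h x = f1 x * jac N K f2 g h x + f2 x * jac N K f1 g h x"
proof -
  have p: "pbr N K a b \<in> poly_fun N K" if "a \<in> poly_fun N K" "b \<in> poly_fun N K" for a b
    using that by (rule pbr_pf)
  have "jac N K (\<lambda>x. f1 x * f2 x) g h x =
      (f1 x * pbr N K f2 (pbr N K g h) x + f2 x * pbr N K f1 (pbr N K g h) x)
    + (f1 x * pbr N K g (pbr N K h f2) x + pbr N K h f2 x * pbr N K g f1 x + (f2 x * pbr N K g (pbr N K h f1) x + pbr N K h f1 x * pbr N K g f2 x))
    + (f1 x * pbr N K h (pbr N K f2 g) x + pbr N K f2 g x * pbr N K h f1 x + (f2 x * pbr N K h (pbr N K f1 g) x + pbr N K f1 g x * pbr N K h f2 x))"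
    using assms unfolding jac_def
    by (simp add: pbr_mult_left pbr_mult_right_fun pbr_mult_left_fun pbr_add_right pbr_mult_right p poly_fun.pf_mult)
  also have "\<dots> = f1 x * jac N K f2 g h x + f2 x * jac N K f1 g h x"
    unfolding jac_def
    using pbr_skew[of N K f2 g x] pbr_skew[of N K f1 g x]
    by (simp add: algebra_simps)
  finally show ?thesis .
qed

lemma get_pf: "u \<in> Cset N K \<Longrightarrow> (\<lambda>y. get y u) \<in> poly_fun N K"
  by (cases u) (auto intro: poly_fun.intros)

lemma rot3: "(\<Sum>a\<in>A. \<Sum>b\<in>A. \<Sum>c\<in>A. F a b c) = (\<Sum>b\<in>A. \<Sum>c\<in>A. \<Sum>a\<in>A. (F a b c :: complex))"
proof -
  have "(\<Sum>a\<in>A. \<Sum>b\<in>A. \<Sum>c\<in>A. F a b c) = (\<Sum>b\<in>A. \<Sum>a\<in>A. \<Sum>c\<in>A. F a b c)" by (rule sum.swap)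
  also have "\<dots> = (\<Sum>b\<in>A. \<Sum>c\<in>A. \<Sum>a\<in>A. F a b c)" by (rule sum.cong[OF refl], rule sum.swap)
  finally show ?thesis .
qed

definition KK :: "nat \<Rightarrow> nat \<Rightarrow> (rep \<Rightarrow> complex) \<Rightarrow> (rep \<Rightarrow> complex) \<Rightarrow> (rep \<Rightarrow> complex) \<Rightarrow> rep \<Rightarrow> complex" where
  "KK N K f g h x = (\<Sum>w\<in>Cset N K. \<Sum>z\<in>Cset N K. dd g x w * dd h x z * pbr N K f (pbr N K (\<lambda>y. get y w) (\<lambda>y. get y z)) x)"

lemma pbr_repr: "f \<in> poly_fun N K \<Longrightarrow> pbr N K f \<Phi> x = (\<Sum>u\<in>Cset N K. dd f x u * pbr N K (\<lambda>y. get y u) \<Phi> x)"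
  by (rule deriv_repr[where D="\<lambda>f. pbr N K f \<Phi>"]) (auto simp: pbr_add_left pbr_mult_left)

lemma jac_repr: "f \<in> poly_fun N K \<Longrightarrow> g \<in> poly_fun N K \<Longrightarrow> h \<in> poly_fun N K \<Longrightarrow>
  jac N K f g h x = (\<Sum>u\<in>Cset N K. dd f x u * jac N K (\<lambda>y. get y u) g h x)"
  by (rule deriv_repr[where D="\<lambda>f. jac N K f g h"]) (auto simp: jac_const jac_add jac_mult)

lemma jac_KK:
  assumes f: "f \<in> poly_fun N K" and g: "g \<in> poly_fun N K" and h: "h \<in> poly_fun N K"
  shows "jac N K f g h x = KK N K f g h x + KK N K g h f x + KK N K h f g x"
proof -
  let ?C = "Cset N K"
  let ?x = "\<lambda>u. (\<lambda>y. get y u)"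
  define T where "T u w z = pbr N K (?x u) (pbr N K (?x w) (?x z)) x" for u w z
  have j1: "jac N K f g h x = (\<Sum>u\<in>?C. \<Sum>w\<in>?C. \<Sum>z\<in>?C. dd f x u * dd g x w * dd h x z * (T z u w + T u w z + T w z u))"
  proof -
    have "jac N K f g h x = (\<Sum>u\<in>?C. dd f x u * jac N K (?x u) g h x)"
      by (rule jac_repr[OF f g h])
    also have "\<dots> = (\<Sum>u\<in>?C. dd f x u * (\<Sum>w\<in>?C. dd g x w * (\<Sum>z\<in>?C. dd h x z * jac N K (?x z) (?x u) (?x w) x)))"
    proof (rule sum.cong[OF refl])
      fix u assume u: "u \<in> ?C"
      have "jac N K (?x u) g h x = jac N K g h (?x u) x" by (rule jac_cyc)
      also have "\<dots> = (\<Sum>w\<in>?C. dd g x w * jac N K (?x w) h (?x u) x)"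
        by (rule jac_repr[OF g h get_pf[OF u]])
      also have "\<dots> = (\<Sum>w\<in>?C. dd g x w * (\<Sum>z\<in>?C. dd h x z * jac N K (?x z) (?x u) (?x w) x))"
      proof (rule sum.cong[OF refl])
        fix w assume w: "w \<in> ?C"
        have "jac N K (?x w) h (?x u) x = jac N K h (?x u) (?x w) x" by (rule jac_cyc)
        also have "\<dots> = (\<Sum>z\<in>?C. dd h x z * jac N K (?x z) (?x u) (?x w) x)"
          by (rule jac_repr[OF h get_pf[OF u] get_pf[OF w]])
        finally show "dd g x w * jac N K (?x w) h (?x u) x = dd g x w * (\<Sum>z\<in>?C. dd h x z * jac N K (?x z) (?x u) (?x w) x)" by simp
      qed
      finally show "dd f x u * jac N K (?x u) g h x = dd f x u * (\<Sum>w\<in>?C. dd g x w * (\<Sum>z\<in>?C. dd h x z * jac N K (?x z) (?x u) (?x w) x))" by simp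
    qed
    also have "\<dots> = (\<Sum>u\<in>?C. \<Sum>w\<in>?C. \<Sum>z\<in>?C. dd f x u * dd g x w * dd h x z * (T z u w + T u w z + T w z u))"
      by (simp add: sum_distrib_left jac_def T_def algebra_simps)
    finally show ?thesis .
  qed
  have k1: "KK N K f g h x = (\<Sum>u\<in>?C. \<Sum>w\<in>?C. \<Sum>z\<in>?C. dd f x u * dd g x w * dd h x z * T u w z)"
  proof -
    have "KK N K f g h x = (\<Sum>w\<in>?C. \<Sum>z\<in>?C. \<Sum>u\<in>?C. dd f x u * dd g x w * dd h x z * T u w z)"
      unfolding KK_def T_def by (simp add: pbr_repr[OF f] sum_distrib_left algebra_simps)
    also have "\<dots> = (\<Sum>u\<in>?C. \<Sum>w\<in>?C. \<Sum>z\<in>?C. dd f x u * dd g x w * dd h x z * T u w z)"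
      by (rule rot3[symmetric])
    finally show ?thesis .
  qed
  have k2: "KK N K g h f x = (\<Sum>u\<in>?C. \<Sum>w\<in>?C. \<Sum>z\<in>?C. dd f x u * dd g x w * dd h x z * T w z u)"
  proof -
    have "KK N K g h f x = (\<Sum>a\<in>?C. \<Sum>b\<in>?C. \<Sum>c\<in>?C. dd g x c * dd h x a * dd f x b * T c a b)"
      unfolding KK_def T_def by (simp add: pbr_repr[OF g] sum_distrib_left algebra_simps)
    also have "\<dots> = (\<Sum>b\<in>?C. \<Sum>c\<in>?C. \<Sum>a\<in>?C. dd g x c * dd h x a * dd f x b * T c a b)"
      by (rule rot3)
    finally show ?thesis by (simp add: algebra_simps)
  qed
  have k3: "KK N K h f g x = (\<Sum>u\<in>?C. \<Sum>w\<in>?C. \<Sum>z\<in>?C. dd f x u * dd g x w * dd h x z * T z u w)"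
    unfolding KK_def T_def by (simp add: pbr_repr[OF h] sum_distrib_left algebra_simps)
  show ?thesis unfolding j1 k1 k2 k3
    by (simp add: sum.distrib distrib_left algebra_simps)
qed

lemma pbr_coord_CS: "i < N \<Longrightarrow> a < K \<Longrightarrow> pbr N K (\<lambda>y. get y (CS i a)) (\<lambda>y. get y z) = (\<lambda>y. if CP a i = z then 1 else 0)"
  by (rule ext) (simp add: pbr_ps_left dd_get)

lemma pbr_coord_CP: "i < N \<Longrightarrow> a < K \<Longrightarrow> pbr N K (\<lambda>y. get y (CP a i)) (\<lambda>y. get y z) = (\<lambda>y. - (if CS i a = z then 1 else 0))"
  by (rule ext) (simp add: pbr_pb_left dd_get)

lemma pbr_coord_CB: "m < N \<Longrightarrow> n < N \<Longrightarrow> pbr N K (\<lambda>y. get y (CB m n)) (\<lambda>y. get y z) =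
   (\<lambda>y. \<Sum>p<N. \<Sum>q<N. (if CB p q = z then 1 else 0) * Bbr K y m n p q)"
  by (rule ext) (simp add: pbr_Bm_left dd_get)

lemma pbr_uminus_right: "f \<in> poly_fun N K \<Longrightarrow> pbr N K h (\<lambda>x. - f x) x = - pbr N K h f x"
  using pbr_cmult_right[of f N K h "-1" x] by simp

definition KKc :: "nat \<Rightarrow> nat \<Rightarrow> (rep \<Rightarrow> complex) \<Rightarrow> rep \<Rightarrow> crd \<Rightarrow> crd \<Rightarrow> complex" where
  "KKc N K f x w z = (case w of CB m n \<Rightarrow> (case z of CB p q \<Rightarrow> pbr N K f (\<lambda>y. Bbr K y m n p q) x | _ \<Rightarrow> 0) | _ \<Rightarrow> 0)"

lemma KK1: "w \<in> Cset N K \<Longrightarrow> z \<in> Cset N K \<Longrightarrow>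
  pbr N K f (pbr N K (\<lambda>y. get y w) (\<lambda>y. get y z)) x = KKc N K f x w z"
proof (cases w)
  case (CB m n)
  assume w: "w \<in> Cset N K" and z: "z \<in> Cset N K"
  then have mn: "m < N" "n < N" using CB by auto
  show ?thesis
  proof (cases z)
    case (CB p q)
    then have "p < N" "q < N" using z by auto
    then have "(\<lambda>y. \<Sum>p'<N. \<Sum>q'<N. (if CB p' q' = z then 1 else 0) * Bbr K y m n p' q') = (\<lambda>y. Bbr K y m n p q)"
      using CB by (intro ext) (simp add: if01 cong: if_cong)
    then show ?thesis using \<open>w = CB m n\<close> CB by (simp del: get.simps add: pbr_coord_CB[OF mn] KKc_def)
  next
    case (CS i a)
    then have "(\<lambda>y. \<Sum>p'<N. \<Sum>q'<N. (if CB p' q' = z then 1 else 0) * Bbr K y m n p' q') = (\<lambda>y. 0)"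
      by (intro ext) simp
    then show ?thesis using \<open>w = CB m n\<close> CS by (simp del: get.simps add: pbr_coord_CB[OF mn] KKc_def pbr_const_fun)
  next
    case (CP a i)
    then have "(\<lambda>y. \<Sum>p'<N. \<Sum>q'<N. (if CB p' q' = z then 1 else 0) * Bbr K y m n p' q') = (\<lambda>y. 0)"
      by (intro ext) simp
    then show ?thesis using \<open>w = CB m n\<close> CP by (simp del: get.simps add: pbr_coord_CB[OF mn] KKc_def pbr_const_fun)
  qed
next
  case (CS i a)
  assume w: "w \<in> Cset N K"
  then have "i < N" "a < K" using CS by auto
  then show ?thesis using CS by (simp del: get.simps add: pbr_coord_CS KKc_def pbr_const_fun)
next
  case (CP a i)
  assume w: "w \<in> Cset N K"
  then have "i < N" "a < K" using CP by auto
  then show ?thesis using CP by (simp del: get.simps add: pbr_coord_CP KKc_def pbr_const_fun)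
qed

definition Qf :: "nat \<Rightarrow> nat \<Rightarrow> (rep \<Rightarrow> complex) \<Rightarrow> rep \<Rightarrow> nat \<Rightarrow> nat \<Rightarrow> complex" where
  "Qf N K f x m q = (\<Sum>a<K. ps x m a * dd f x (CS q a)) - (\<Sum>a<K. pb x a q * dd f x (CP a m))"

lemma KK2: assumes f: "f \<in> poly_fun N K" and idx: "m < N" "n < N" "p < N" "q < N"
  shows "pbr N K f (\<lambda>y. Bbr K y m n p q) x = (if n = p then Qf N K f x m q else 0) - (if m = q then Qf N K f x p n else 0)"
proof -
  have P: "pbr N K f (\<lambda>y. \<Sum>a<K. pb y a q' * ps y m' a) x = Qf N K f x m' q'" if "m' < N" "q' < N" for m' q'
  proof -
    have "pbr N K f (\<lambda>y. \<Sum>a<K. pb y a q' * ps y m' a) x = (\<Sum>a<K. pbr N K f (\<lambda>y. pb y a q' * ps y m' a) x)"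
      by (rule pbr_sum_right) (use that in \<open>auto intro!: poly_fun.intros\<close>)
    also have "\<dots> = (\<Sum>a<K. pb x a q' * (- dd f x (CP a m')) + ps x m' a * dd f x (CS q' a))"
      by (intro sum.cong refl, subst pbr_mult_right) (use that in \<open>auto intro!: poly_fun.intros simp: pbr_ps_right pbr_pb_right\<close>)
    finally show ?thesis by (simp add: Qf_def sum_subtractf sum_negf)
  qed
  have pf1: "(\<lambda>y. \<Sum>a<K. pb y a q' * ps y m' a) \<in> poly_fun N K" if "m' < N" "q' < N" for m' q'
    using that by (intro pf_sum) (auto intro!: poly_fun.intros)
  show ?thesis
    unfolding Bbr_def
    by (cases "n = p"; cases "m = q")
       (simp_all add: pbr_minus_right pbr_uminus_right pf1 idx P poly_fun.pf_const)
qed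

lemma KK3: assumes f: "f \<in> inv_alg N K" and mq: "m < N" "q < N"
  shows "Qf N K f x m q = (\<Sum>r<N. dd f x (CB r m) * Bm x r q) - (\<Sum>n<N. dd f x (CB q n) * Bm x m n)"
  using inf_inv[OF f mq(2) mq(1), of x]
  by (simp add: Qf_def algebra_simps)

definition KKd :: "nat \<Rightarrow> nat \<Rightarrow> (rep \<Rightarrow> complex) \<Rightarrow> rep \<Rightarrow> crd \<Rightarrow> crd \<Rightarrow> complex" where
  "KKd N K f x w z = (case w of CB m n \<Rightarrow> (case z of CB p q \<Rightarrow>
      (if n = p then Qf N K f x m q else 0) - (if m = q then Qf N K f x p n else 0) | _ \<Rightarrow> 0) | _ \<Rightarrow> 0)"

lemma KK1': "f \<in> poly_fun N K \<Longrightarrow> w \<in> Cset N K \<Longrightarrow> z \<in> Cset N K \<Longrightarrow>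
  pbr N K f (pbr N K (\<lambda>y. get y w) (\<lambda>y. get y z)) x = KKd N K f x w z"
  by (cases w; cases z) (simp_all del: get.simps add: KK1 KKc_def KKd_def KK2)

lemma KK4: assumes f: "f \<in> poly_fun N K"
  shows "KK N K f g h x = (\<Sum>m<N. \<Sum>n<N. \<Sum>q<N. dd g x (CB m n) * dd h x (CB n q) * Qf N K f x m q)
     - (\<Sum>m<N. \<Sum>n<N. \<Sum>p<N. dd g x (CB m n) * dd h x (CB p m) * Qf N K f x p n)"
proof -
  let ?G = "\<lambda>m n. dd g x (CB m n)" and ?H = "\<lambda>m n. dd h x (CB m n)" and ?Q = "Qf N K f x"
  have "KK N K f g h x = (\<Sum>w\<in>Cset N K. \<Sum>z\<in>Cset N K. dd g x w * dd h x z * KKd N K f x w z)"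
    unfolding KK_def by (intro sum.cong refl) (simp add: KK1'[OF f])
  also have "\<dots> = (\<Sum>m<N. \<Sum>n<N. \<Sum>p<N. \<Sum>q<N. ?G m n * ?H p q * ((if n = p then ?Q m q else 0) - (if m = q then ?Q p n else 0)))"
    by (simp add: sum_C KKd_def)
  also have "\<dots> = (\<Sum>m<N. \<Sum>n<N. \<Sum>p<N. \<Sum>q<N. if p = n then ?G m n * ?H p q * ?Q m q else 0)
     - (\<Sum>m<N. \<Sum>n<N. \<Sum>p<N. \<Sum>q<N. if q = m then ?G m n * ?H p q * ?Q p n else 0)"
    by (simp add: right_diff_distrib sum_subtractf if_distrib[of "\<lambda>z. _ * z"] eq_commute cong: if_cong)
  also have "\<dots> = (\<Sum>m<N. \<Sum>n<N. \<Sum>q<N. ?G m n * ?H n q * ?Q m q) - (\<Sum>m<N. \<Sum>n<N. \<Sum>p<N. ?G m n * ?H p m * ?Q p n)"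
  proof -
    have a: "(\<Sum>p<N. \<Sum>q<N. if p = n then ?G m n * ?H p q * ?Q m q else 0) = (\<Sum>q<N. ?G m n * ?H n q * ?Q m q)" if "n < N" for m n
      using that by simp
    have b: "(\<Sum>p<N. \<Sum>q<N. if q = m then ?G m n * ?H p q * ?Q p n else 0) = (\<Sum>p<N. ?G m n * ?H p m * ?Q p n)" if "m < N" for m n
      using that by simp
    show ?thesis by (simp add: a b)
  qed
  finally show ?thesis .
qed

definition Z4 :: "nat \<Rightarrow> (nat \<Rightarrow> nat \<Rightarrow> complex) \<Rightarrow> (nat \<Rightarrow> nat \<Rightarrow> complex) \<Rightarrow> (nat \<Rightarrow> nat \<Rightarrow> complex) \<Rightarrow> (nat \<Rightarrow> nat \<Rightarrow> complex) \<Rightarrow> complex" where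
  "Z4 N X1 X2 X3 X4 = (\<Sum>a<N. \<Sum>b<N. \<Sum>c<N. \<Sum>d<N. X1 a b * X2 b c * X3 c d * X4 d a)"

lemma Z4_rot: "Z4 N X1 X2 X3 X4 = Z4 N X2 X3 X4 X1"
proof -
  have "Z4 N X1 X2 X3 X4 = (\<Sum>b<N. \<Sum>a<N. \<Sum>c<N. \<Sum>d<N. X1 a b * X2 b c * X3 c d * X4 d a)"
    unfolding Z4_def by (rule sum.swap)
  also have "\<dots> = (\<Sum>b<N. \<Sum>c<N. \<Sum>a<N. \<Sum>d<N. X1 a b * X2 b c * X3 c d * X4 d a)"
    by (rule sum.cong[OF refl], rule sum.swap)
  also have "\<dots> = (\<Sum>b<N. \<Sum>c<N. \<Sum>d<N. \<Sum>a<N. X1 a b * X2 b c * X3 c d * X4 d a)"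
    by (rule sum.cong[OF refl], rule sum.cong[OF refl], rule sum.swap)
  also have "\<dots> = Z4 N X2 X3 X4 X1"
    unfolding Z4_def by (simp add: algebra_simps)
  finally show ?thesis .
qed

lemma KKZ: assumes f: "f \<in> inv_alg N K"
  shows "KK N K f g h x = Z4 N (\<lambda>a b. Bm x b a) (\<lambda>a b. dd f x (CB a b)) (\<lambda>a b. dd g x (CB a b)) (\<lambda>a b. dd h x (CB a b))
     - Z4 N (\<lambda>a b. Bm x b a) (\<lambda>a b. dd g x (CB a b)) (\<lambda>a b. dd h x (CB a b)) (\<lambda>a b. dd f x (CB a b))
     - Z4 N (\<lambda>a b. Bm x b a) (\<lambda>a b. dd f x (CB a b)) (\<lambda>a b. dd h x (CB a b)) (\<lambda>a b. dd g x (CB a b))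
     + Z4 N (\<lambda>a b. Bm x b a) (\<lambda>a b. dd h x (CB a b)) (\<lambda>a b. dd g x (CB a b)) (\<lambda>a b. dd f x (CB a b))"
proof -
  let ?T = "\<lambda>a b. Bm x b a" and ?F = "\<lambda>a b. dd f x (CB a b)" and ?G = "\<lambda>a b. dd g x (CB a b)" and ?H = "\<lambda>a b. dd h x (CB a b)"
  have fp: "f \<in> poly_fun N K" using f by (rule inv_pf)
  have Q: "Qf N K f x m q = (\<Sum>r<N. ?F r m * ?T q r) - (\<Sum>r<N. ?F q r * ?T r m)" if "m < N" "q < N" for m q
    using KK3[OF f that] by simp
  have t1: "(\<Sum>m<N. \<Sum>n<N. \<Sum>q<N. ?G m n * ?H n q * Qf N K f x m q) = Z4 N ?G ?H ?T ?F - Z4 N ?G ?H ?F ?T"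
    by (simp add: Q Z4_def right_diff_distrib sum_subtractf sum_distrib_left algebra_simps)
  have t2: "(\<Sum>m<N. \<Sum>n<N. \<Sum>p<N. ?G m n * ?H p m * Qf N K f x p n) = Z4 N ?H ?G ?T ?F - Z4 N ?H ?G ?F ?T"
  proof -
    have "(\<Sum>m<N. \<Sum>n<N. \<Sum>p<N. ?G m n * ?H p m * Qf N K f x p n) = (\<Sum>p<N. \<Sum>m<N. \<Sum>n<N. ?G m n * ?H p m * Qf N K f x p n)"
      by (rule rot3[symmetric])
    also have "\<dots> = Z4 N ?H ?G ?T ?F - Z4 N ?H ?G ?F ?T"
      by (simp add: Q Z4_def right_diff_distrib sum_subtractf sum_distrib_left algebra_simps)
    finally show ?thesis .
  qed
  have r1: "Z4 N ?G ?H ?T ?F = Z4 N ?T ?F ?G ?H" by (simp only: Z4_rot[of N ?G] Z4_rot[of N ?H])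
  have r2: "Z4 N ?G ?H ?F ?T = Z4 N ?T ?G ?H ?F" by (simp only: Z4_rot[of N ?T])
  have r3: "Z4 N ?H ?G ?T ?F = Z4 N ?T ?F ?H ?G" by (simp only: Z4_rot[of N ?H] Z4_rot[of N ?G])
  have r4: "Z4 N ?H ?G ?F ?T = Z4 N ?T ?H ?G ?F" by (simp only: Z4_rot[of N ?T])
  show ?thesis unfolding KK4[OF fp] t1 t2 r1 r2 r3 r4 by simp
qed

lemma claim3: assumes f: "f \<in> inv_alg N K" and g: "g \<in> inv_alg N K" and h: "h \<in> inv_alg N K"
  shows "jac N K f g h x = 0"
  unfolding jac_KK[OF inv_pf[OF f] inv_pf[OF g] inv_pf[OF h]] KKZ[OF f] KKZ[OF g] KKZ[OF h]
  by simp


theorem mainTheorem3: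
  fixes N K :: nat
  shows "(\<forall>p q a b c d. a < K \<and> b < K \<and> c < K \<and> d < K \<longrightarrow>
            pbr N K (tfun N K p a b) (tfun N K q c d) =
            (\<lambda>x. \<Sum>i\<in>{-1 .. int (min p q) - 1}.
                 tfun' N K (int (p + q) - 1 - i) a d x * tfun' N K i c b x
               - tfun' N K i a d x * tfun' N K (int (p + q) - 1 - i) c b x))
       \<and> (\<forall>n f. 1 \<le> n \<and> f \<in> inv_alg N K \<longrightarrow> pbr N K (trBt N K n) f = (\<lambda>x. 0))
       \<and> (\<forall>f\<in>inv_alg N K. \<forall>g\<in>inv_alg N K. \<forall>h\<in>inv_alg N K.
            (\<lambda>x. pbr N K f (pbr N K g h) x + pbr N K g (pbr N K h f) x
                 + pbr N K h (pbr N K f g) x) = (\<lambda>x. 0))"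
proof (intro conjI allI impI ballI)
  fix p q a b c d assume "a < K \<and> b < K \<and> c < K \<and> d < K"
  then show "pbr N K (tfun N K p a b) (tfun N K q c d) =
            (\<lambda>x. \<Sum>i\<in>{-1 .. int (min p q) - 1}.
                 tfun' N K (int (p + q) - 1 - i) a d x * tfun' N K i c b x
               - tfun' N K i a d x * tfun' N K (int (p + q) - 1 - i) c b x)"
    by (intro claim1) auto
next
  fix n :: nat and f assume "1 \<le> n \<and> f \<in> inv_alg N K"
  then show "pbr N K (trBt N K n) f = (\<lambda>x. 0)" by (intro claim2) auto
next
  fix f g h assume "f \<in> inv_alg N K" "g \<in> inv_alg N K" "h \<in> inv_alg N K"
  then show "(\<lambda>x. pbr N K f (pbr N K g h) x + pbr N K g (pbr N K h f) x
                 + pbr N K h (pbr N K f g) x) = (\<lambda>x. 0)"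
    using claim3 unfolding jac_def by blast
qed

end
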